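(* The action of the additive group $\mathfrak h$ on $\mathfrak h$ by translation extends to the action on $\bar{\mathfrak h}$ given by $y\cdot(x_\lambda)_\lambda=(x_\lambda+\lambda(y))_\lambda$ (with $\infty+c=\infty$), and $$\bar{\mathfrak h}=\bigsqcup_{k=0}^{r}\ \bigsqcup_{\Psi\ \text{$k$-step good}}\mathring C(\Psi),$$ a disjoint union over all $k$-step good root subsystems $\Psi$ of $\Phi$, $0\le k\le r$. The sets $\mathring C(\Psi)$ are exactly the $\mathfrak h$-orbits on $\bar{\mathfrak h}$ (in particular there are finitely many, and $\mathring C(\Phi)=\mathfrak h$ is the open orbit), each $\mathring C(\Psi)$ is isomorphic to an affine space of dimension $\operatorname{rk}\Psi=r-k$, and this decomposition is an affine paving of $\bar{\mathfrak h}$.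
   Context: Let $\mathfrak g$ be a complex semisimple Lie algebra, $\mathfrak h$ a Cartan subalgebra, $r=\dim\mathfrak h$, $\Phi\subset\mathfrak h^*$ its root system, $\Phi^+$ a fixed set of positive roots, $d=|\Phi^+|$. Identify $\mathbb C$ with $\{[x_0:x_1]:x_0\ne0\}\subset\mathbb P^1$ via $c\mapsto[1:c]$, $\infty=[0:1]$; points of $(\mathbb P^1)^d$ are $x=(x_\lambda)_{\lambda\in\Phi^+}$. Identify $\mathfrak h$ with its image under $h\mapsto(\lambda(h))_{\lambda\in\Phi^+}\in\mathbb C^d\subset(\mathbb P^1)^d$; $\bar{\mathfrak h}$ is the Zariski closure of $\mathfrak h$ in $(\mathbb P^1)^d$. A root subsystem $\Psi\subseteq\Phi$ is closed if $\lambda,\mu\in\Psi$, $\lambda+\mu\in\Phi$ imply $\lambda+\mu\in\Psi$; $\operatorname{rk}\Psi=\dim\operatorname{Span}\Psi$. A good root subsystem of a root system $\Theta$ of rank $m$ is a closed root subsystem of rank $m-1$ maximal under inclusion among closed root subsystems of rank $m-1$. The $0$-step good root subsystem of $\Phi$ is $\Phi$; for $k\ge1$, a $k$-step good root subsystem is a good root subsystem of a $(k-1)$-step good root subsystem. For a closed root subsystem $\Psi$ with $\Psi^+=\Psi\cap\Phi^+$, $\mathring C(\Psi)$ is the set of $x\in(\mathbb P^1)^d$ with $x_\lambda=\infty$ for $\lambda\in\Phi^+\setminus\Psi$ and $(x_\lambda)_{\lambda\in\Psi^+}=(\lambda(h))_{\lambda\in\Psi^+}$ for some $h\in\mathfrak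 h$. *)

theory Defs
  imports "HOL-Analysis.Analysis"
begin

text \<open>The Cartan subalgebra h is modelled as complex^'n, its dual is the complexification
 of real^'n, and a root lam :: real^'n acts on h :: complex^'n by the pairing below.
 The roots of a complex semisimple Lie algebra form exactly a reduced crystallographic
 root system spanning real^'n (with respect to some invariant inner product; after a
 linear change of coordinates this may be taken to be the standard one).\<close>

definition pairing :: "real^'n \<Rightarrow> complex^'n \<Rightarrow> complex" where
  "pairing lam h = (\<Sum>i\<in>UNIV. complex_of_real (lam $ i) * h $ i)"

definition reflect :: "real^'n \<Rightarrow> real^'n \<Rightarrow> real^'n" where
  "reflect a b = b - (2 * (b \<bullet> a) / (a \<bullet> a)) *\<^sub>R a"

definition root_system :: "(real^'n) set \<Rightarrow> bool" where
  "root_system R \<longleftrightarrow> finite R \<and> 0 \<notin> R \<and> span R = UNIV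
     \<and> (\<forall>a\<in>R. \<forall>b\<in>R. reflect a b \<in> R)
     \<and> (\<forall>a\<in>R. \<forall>b\<in>R. 2 * (b \<bullet> a) / (a \<bullet> a) \<in> \<int>)
     \<and> (\<forall>a\<in>R. \<forall>c::real. c *\<^sub>R a \<in> R \<longrightarrow> c = 1 \<or> c = -1)"

definition positive_system :: "(real^'n) set \<Rightarrow> (real^'n) set \<Rightarrow> bool" where
  "positive_system R P \<longleftrightarrow>
     (\<exists>f. (\<forall>a\<in>R. f \<bullet> a \<noteq> 0) \<and> P = {a\<in>R. f \<bullet> a > 0})"

definition root_subsystem :: "(real^'n) set \<Rightarrow> (real^'n) set \<Rightarrow> bool" where
  "root_subsystem T S \<longleftrightarrow> S \<subseteq> T \<and> (\<forall>a\<in>S. - a \<in> S) \<and> (\<forall>a\<in>S. \<forall>b\<in>S. reflect a b \<in> S)"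

definition closed_in_rs :: "(real^'n) set \<Rightarrow> (real^'n) set \<Rightarrow> bool" where
  "closed_in_rs T S \<longleftrightarrow> (\<forall>a\<in>S. \<forall>b\<in>S. a + b \<in> T \<longrightarrow> a + b \<in> S)"

definition closed_root_subsystem :: "(real^'n) set \<Rightarrow> (real^'n) set \<Rightarrow> bool" where
  "closed_root_subsystem T S \<longleftrightarrow> root_subsystem T S \<and> closed_in_rs T S"

definition rk :: "(real^'n) set \<Rightarrow> nat" where
  "rk S = dim (span S)"

definition good_root_subsystem :: "(real^'n) set \<Rightarrow> (real^'n) set \<Rightarrow> bool" where
  "good_root_subsystem T S \<longleftrightarrow>
     closed_root_subsystem T S \<and> rk S + 1 = rk T \<and>
     (\<forall>S'. closed_root_subsystem T S' \<and> rk S' + 1 = rk T \<and> S \<subseteq> S' \<longrightarrow> S' = S)"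

fun kstep_good :: "(real^'n) set \<Rightarrow> nat \<Rightarrow> (real^'n) set \<Rightarrow> bool" where
  "kstep_good R 0 S = (S = R)"
| "kstep_good R (Suc k) S = (\<exists>T. kstep_good R k T \<and> good_root_subsystem T S)"

text \<open>A point of P^1 is a complex option: Some c = [1:c], None = infinity.
 A point of (P^1)^d is a map from roots to P^1, indexed by the positive roots P
 (value None outside P, by convention).\<close>

definition Pd :: "(real^'n) set \<Rightarrow> (real^'n \<Rightarrow> complex option) set" where
  "Pd P = {x. \<forall>lam. lam \<notin> P \<longrightarrow> x lam = None}"

definition emb :: "(real^'n) set \<Rightarrow> complex^'n \<Rightarrow> (real^'n \<Rightarrow> complex option)" where
  "emb P h = (\<lambda>lam. if lam \<in> P then Some (pairing lam h) else None)"

definition hset :: "(real^'n) set \<Rightarrow> (real^'n \<Rightarrow> complex option) set" where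
  "hset P = range (emb P)"

definition act :: "complex^'n \<Rightarrow> (real^'n \<Rightarrow> complex option) \<Rightarrow> (real^'n \<Rightarrow> complex option)" where
  "act y x = (\<lambda>lam. map_option (\<lambda>c. c + pairing lam y) (x lam))"

definition orbit :: "(real^'n \<Rightarrow> complex option) \<Rightarrow> (real^'n \<Rightarrow> complex option) set" where
  "orbit x = {act y x | y. True}"

definition Cring :: "(real^'n) set \<Rightarrow> (real^'n) set \<Rightarrow> (real^'n \<Rightarrow> complex option) set" where
  "Cring P S = {x \<in> Pd P. (\<forall>lam\<in>P - S. x lam = None) \<and>
                  (\<exists>h. \<forall>lam\<in>P \<inter> S. x lam = Some (pairing lam h))}"

inductive_set poly_fun :: "(('v \<Rightarrow> complex) \<Rightarrow> complex) set" where
  pf_const: "(\<lambda>v. c) \<in> poly_fun"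
| pf_var: "(\<lambda>v. v i) \<in> poly_fun"
| pf_add: "p \<in> poly_fun \<Longrightarrow> q \<in> poly_fun \<Longrightarrow> (\<lambda>v. p v + q v) \<in> poly_fun"
| pf_mult: "p \<in> poly_fun \<Longrightarrow> q \<in> poly_fun \<Longrightarrow> (\<lambda>v. p v * q v) \<in> poly_fun"

definition aff_space :: "'v set \<Rightarrow> ('v \<Rightarrow> complex) set" where
  "aff_space I = {v. \<forall>i. i \<notin> I \<longrightarrow> v i = 0}"

definition aff_closed :: "'v set \<Rightarrow> ('v \<Rightarrow> complex) set \<Rightarrow> bool" where
  "aff_closed I Z \<longleftrightarrow> (\<exists>F \<subseteq> poly_fun. Z = {v \<in> aff_space I. \<forall>f\<in>F. f v = 0})"

text \<open>Standard affine charts of (P^1)^d: for A a subset of P, coordinate x_lam for lam in A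
 and 1/x_lam for lam not in A.\<close>
definition chart :: "(real^'n) set \<Rightarrow> (real^'n) set \<Rightarrow> (real^'n \<Rightarrow> complex option) set" where
  "chart P A = {x \<in> Pd P. \<forall>lam\<in>P. (lam \<in> A \<longrightarrow> x lam \<noteq> None) \<and> (lam \<notin> A \<longrightarrow> x lam \<noteq> Some 0)}"

definition ccoord :: "(real^'n) set \<Rightarrow> (real^'n) set \<Rightarrow> (real^'n \<Rightarrow> complex option) \<Rightarrow> (real^'n \<Rightarrow> complex)" where
  "ccoord P A x = (\<lambda>lam. if lam \<in> P then
       (if lam \<in> A then the (x lam) else (case x lam of None \<Rightarrow> 0 | Some c \<Rightarrow> inverse c))
     else 0)"

definition zclosed :: "(real^'n) set \<Rightarrow> (real^'n \<Rightarrow> complex option) set \<Rightarrow> bool" where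
  "zclosed P Z \<longleftrightarrow> Z \<subseteq> Pd P \<and> (\<forall>A\<subseteq>P. aff_closed P (ccoord P A ` (Z \<inter> chart P A)))"

definition zclosure :: "(real^'n) set \<Rightarrow> (real^'n \<Rightarrow> complex option) set \<Rightarrow> (real^'n \<Rightarrow> complex option) set" where
  "zclosure P S = \<Inter>{Z. zclosed P Z \<and> S \<subseteq> Z}"

definition zopen_in :: "(real^'n) set \<Rightarrow> (real^'n \<Rightarrow> complex option) set \<Rightarrow> (real^'n \<Rightarrow> complex option) set \<Rightarrow> bool" where
  "zopen_in P X U \<longleftrightarrow> U \<subseteq> X \<and> (\<exists>Z. zclosed P Z \<and> X - U = X \<inter> Z)"

text \<open>A subset S of (P^1)^d lying in a standard affine chart is isomorphic (as a variety)
 to affine m-space: a bijection from C^m whose chart coordinates are polynomial and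
 whose inverse is given by polynomials in the chart coordinates.\<close>
definition iso_affine :: "(real^'n) set \<Rightarrow> (real^'n \<Rightarrow> complex option) set \<Rightarrow> nat \<Rightarrow> bool" where
  "iso_affine P S m \<longleftrightarrow> (\<exists>A\<subseteq>P. S \<subseteq> chart P A \<and>
     (\<exists>phi. bij_betw phi (aff_space {..<m}) S \<and>
        (\<forall>lam\<in>P. \<exists>p\<in>poly_fun. \<forall>t\<in>aff_space {..<m}. ccoord P A (phi t) lam = p t) \<and>
        (\<forall>i<m. \<exists>q\<in>poly_fun. \<forall>x\<in>S. inv_into (aff_space {..<m}) phi x i = q (ccoord P A x))))"

end

theory Submission
  imports Defs
begin

section \<open>pairing\<close>

lemma pairing_add_right: "pairing lam (h + y) = pairing lam h + pairing lam y"
  unfolding pairing_def by (simp add: distrib_left sum.distrib)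

lemma pairing_zero_right[simp]: "pairing lam 0 = 0"
  unfolding pairing_def by simp

lemma pairing_diff_right: "pairing lam (h - y) = pairing lam h - pairing lam y"
  unfolding pairing_def by (simp add: right_diff_distrib sum_subtractf)

lemma pairing_add_left: "pairing (a + b) h = pairing a h + pairing b h"
  unfolding pairing_def by (simp add: distrib_right sum.distrib)

lemma pairing_scale_left: "pairing (c *\<^sub>R a) h = complex_of_real c * pairing a h"
  unfolding pairing_def by (simp add: sum_distrib_left mult.assoc)

lemma pairing_zero_left[simp]: "pairing 0 h = 0"
  unfolding pairing_def by simp

lemma pairing_sum_left: "pairing (\<Sum>i\<in>I. f i) h = (\<Sum>i\<in>I. pairing (f i) h)"
proof (induction I rule: infinite_finite_induct)
  case (insert x F) then show ?case by (simp add: pairing_add_left)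
qed auto

lemma pairing_of_real: "pairing lam (\<chi> i. complex_of_real (w $ i)) = complex_of_real (lam \<bullet> w)"
  unfolding pairing_def inner_vec_def by simp

lemma pairing_real_imag:
  "pairing lam (\<chi> i. complex_of_real (w1 $ i) + \<i> * complex_of_real (w2 $ i))
    = complex_of_real (lam \<bullet> w1) + \<i> * complex_of_real (lam \<bullet> w2)"
  unfolding pairing_def inner_vec_def
  by (simp add: distrib_left sum.distrib sum_distrib_left algebra_simps)

lemma linear_inner_rep:
  fixes g :: "'a::euclidean_space \<Rightarrow> real"
  assumes "linear g"
  shows "\<exists>w. \<forall>x. g x = x \<bullet> w"
proof -
  define w where "w = (\<Sum>b\<in>Basis. g b *\<^sub>R b)"
  have "g x = x \<bullet> w" for x
  proof -
    have "g x = g (\<Sum>b\<in>Basis. (x \<bullet> b) *\<^sub>R b)" by (simp add: euclidean_representation)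
    also have "\<dots> = (\<Sum>b\<in>Basis. (x \<bullet> b) * g b)"
      using assms by (simp add: linear_sum linear_scale)
    also have "\<dots> = x \<bullet> w" unfolding w_def by (simp add: inner_sum_right mult.commute)
    finally show ?thesis .
  qed
  then show ?thesis by blast
qed

lemma solve_indep:
  fixes B :: "(real^'n) set"
  assumes "independent B"
  shows "\<exists>h. \<forall>b\<in>B. pairing b h = p b"
proof -
  obtain g1 where g1: "linear g1" "\<forall>x\<in>B. g1 x = Re (p x)"
    using linear_independent_extend[OF assms, of "\<lambda>x. Re (p x)"] by blast
  obtain g2 where g2: "linear g2" "\<forall>x\<in>B. g2 x = Im (p x)"
    using linear_independent_extend[OF assms, of "\<lambda>x. Im (p x)"] by blast
  obtain w1 where w1: "\<forall>x. g1 x = x \<bullet> w1" using linear_inner_rep[OF g1(1)] by blast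
  obtain w2 where w2: "\<forall>x. g2 x = x \<bullet> w2" using linear_inner_rep[OF g2(1)] by blast
  have "pairing b (\<chi> i. complex_of_real (w1 $ i) + \<i> * complex_of_real (w2 $ i)) = p b" if "b \<in> B" for b
    unfolding pairing_real_imag using g1(2) g2(2) w1 w2 that
    by (simp add: complex_eq_iff)
  then show ?thesis by blast
qed


section \<open>Root systems and flats\<close>

definition flat :: "(real^'n) set \<Rightarrow> (real^'n) set \<Rightarrow> bool" where
  "flat R S \<longleftrightarrow> S \<subseteq> R \<and> R \<inter> span S \<subseteq> S"

lemma reflect_self: "a \<noteq> 0 \<Longrightarrow> reflect a a = - a"
  unfolding reflect_def by (simp add: scaleR_2)

lemma rs_neg: "root_system R \<Longrightarrow> a \<in> R \<Longrightarrow> - a \<in> R"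
  unfolding root_system_def by (metis reflect_self)

lemma rs_reflect: "root_system R \<Longrightarrow> a \<in> R \<Longrightarrow> b \<in> R \<Longrightarrow> reflect a b \<in> R"
  unfolding root_system_def by blast

lemma reflect_span: "a \<in> span S \<Longrightarrow> b \<in> span S \<Longrightarrow> reflect a b \<in> span S"
  unfolding reflect_def by (intro span_diff span_scale) auto

lemma flat_neg: "root_system R \<Longrightarrow> flat R S \<Longrightarrow> a \<in> S \<Longrightarrow> - a \<in> S"
  unfolding flat_def using rs_neg span_neg span_base by blast

lemma flat_closed_sub:
  assumes R: "root_system R" and S: "flat R S" and "S \<subseteq> T" "T \<subseteq> R"
  shows "closed_root_subsystem T S"
  unfolding closed_root_subsystem_def root_subsystem_def closed_in_rs_def
proof (intro conjI ballI impI)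
  show "S \<subseteq> T" by fact
  fix a assume "a \<in> S" then show "- a \<in> S" using flat_neg[OF R S] by blast
next
  fix a b assume ab: "a \<in> S" "b \<in> S"
  then have "reflect a b \<in> R" using S R rs_reflect unfolding flat_def by blast
  moreover have "reflect a b \<in> span S" using ab by (intro reflect_span) (auto intro: span_base)
  ultimately show "reflect a b \<in> S" using S unfolding flat_def by blast
next
  fix a b assume ab: "a \<in> S" "b \<in> S" "a + b \<in> T"
  then have "a + b \<in> span S" by (intro span_add) (auto intro: span_base)
  then show "a + b \<in> S" using S ab \<open>T \<subseteq> R\<close> unfolding flat_def by blast
qed

lemma rk_R: "root_system R \<Longrightarrow> rk R = CARD('n)" for R :: "(real^'n) set"
  unfolding rk_def root_system_def by (simp add: dim_UNIV)

lemma flat_R: "flat R R" unfolding flat_def by auto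

lemma kstep_flat:
  fixes R :: "(real^'n) set"
  assumes R: "root_system R"
  shows "kstep_good R k S \<Longrightarrow> flat R S \<and> rk S + k = CARD('n)"
proof (induction k arbitrary: S)
  case 0 then show ?case using rk_R[OF R] flat_R by auto
next
  case (Suc k)
  then obtain T where T: "kstep_good R k T" "good_root_subsystem T S" by auto
  with Suc.IH have TF: "flat R T" "rk T + k = CARD('n)" by auto
  from T(2) have cS: "closed_root_subsystem T S" and rS: "rk S + 1 = rk T"
    and mx: "\<And>S'. closed_root_subsystem T S' \<Longrightarrow> rk S' + 1 = rk T \<Longrightarrow> S \<subseteq> S' \<Longrightarrow> S' = S"
    unfolding good_root_subsystem_def by blast+
  have ST: "S \<subseteq> T" using cS unfolding closed_root_subsystem_def root_subsystem_def by blast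
  have TR: "T \<subseteq> R" using TF unfolding flat_def by blast
  define S' where "S' = T \<inter> span S"
  have SS': "S \<subseteq> S'" using ST span_base unfolding S'_def by blast
  have spS': "span S' = span S"
    using SS' by (metis S'_def inf_le2 span_mono span_span subset_antisym)
  have "closed_root_subsystem T S'"
    unfolding closed_root_subsystem_def root_subsystem_def closed_in_rs_def
  proof (intro conjI ballI impI)
    show "S' \<subseteq> T" unfolding S'_def by blast
    fix a assume a: "a \<in> S'"
    then have "- a \<in> R" using rs_neg[OF R] TR unfolding S'_def by blast
    moreover have "- a \<in> span S" using a span_neg unfolding S'_def by blast
    moreover have "span S \<subseteq> span T" using ST span_mono by blast
    ultimately show "- a \<in> S'" using TF(1) unfolding S'_def flat_def by blast
  next
    fix a b assume ab: "a \<in> S'" "b \<in> S'"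
    then have "reflect a b \<in> R" using rs_reflect[OF R] TR unfolding S'_def by blast
    moreover have "reflect a b \<in> span S" using ab reflect_span unfolding S'_def by blast
    moreover have "span S \<subseteq> span T" using ST span_mono by blast
    ultimately show "reflect a b \<in> S'" using TF(1) unfolding S'_def flat_def by blast
  next
    fix a b assume ab: "a \<in> S'" "b \<in> S'" "a + b \<in> T"
    then show "a + b \<in> S'" using span_add unfolding S'_def by blast
  qed
  moreover have "rk S' + 1 = rk T" using rS spS' unfolding rk_def by simp
  ultimately have "S' = S" using mx SS' by blast
  then have "flat R S"
    unfolding flat_def using ST TR TF(1) span_mono[OF ST] unfolding S'_def flat_def by blast
  then show ?case using rS TF(2) by simp
qed

lemma flat_kstep:
  fixes R :: "(real^'n) set"
  assumes R: "root_system R"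
  shows "flat R S \<Longrightarrow> kstep_good R (CARD('n) - rk S) S"
proof (induction "CARD('n) - rk S" arbitrary: S rule: less_induct)
  case less
  have le: "rk S \<le> CARD('n)" unfolding rk_def using dim_subset_UNIV[of "span S"] by simp
  show ?case
  proof (cases "rk S = CARD('n)")
    case True
    then have "span S = UNIV" unfolding rk_def dim_span using dim_eq_full[of S] by simp
    then have "S = R" using less.prems unfolding flat_def by blast
    then show ?thesis using True by simp
  next
    case False
    have "\<not> R \<subseteq> span S"
    proof
      assume "R \<subseteq> span S"
      then have "span R \<subseteq> span S" by (metis span_mono span_span)
      then have "span S = UNIV" using R unfolding root_system_def by auto
      then show False using False unfolding rk_def using dim_eq_full[of "span S"] by simp
    qed
    then obtain \<alpha> where \<alpha>: "\<alpha> \<in> R" "\<alpha> \<notin> span S" by blast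
    define T where "T = R \<inter> span (insert \<alpha> S)"
    have SR: "S \<subseteq> R" using less.prems unfolding flat_def by blast
    have iT: "insert \<alpha> S \<subseteq> T" unfolding T_def using \<alpha> SR span_base by blast
    have spT: "span T = span (insert \<alpha> S)"
      using iT by (metis T_def inf_le2 span_mono span_span subset_antisym)
    have rkT: "rk T = rk S + 1"
      unfolding rk_def dim_span spT using \<alpha>(2) by (simp add: dim_insert)
    have fT: "flat R T" using spT unfolding flat_def T_def by blast
    have "CARD('n) - rk T < CARD('n) - rk S" using rkT False le by simp
    then have kT: "kstep_good R (CARD('n) - rk T) T" using less.hyps fT by blast
    have TR: "T \<subseteq> R" unfolding T_def by blast
    have ST: "S \<subseteq> T" using iT by blast
    have "good_root_subsystem T S"
      unfolding good_root_subsystem_def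
    proof (intro conjI allI impI)
      show "closed_root_subsystem T S" using flat_closed_sub[OF R less.prems ST TR] .
      show "rk S + 1 = rk T" using rkT by simp
      fix S' assume H: "closed_root_subsystem T S' \<and> rk S' + 1 = rk T \<and> S \<subseteq> S'"
      then have S'T: "S' \<subseteq> T" unfolding closed_root_subsystem_def root_subsystem_def by blast
      have "dim S' \<le> dim S" using H rkT unfolding rk_def by simp
      then have "span S = span S'" using H dim_eq_span by blast
      then have "S' \<subseteq> S" using S'T TR less.prems span_base unfolding flat_def by blast
      then show "S' = S" using H by blast
    qed
    moreover have "CARD('n) - rk S = Suc (CARD('n) - rk T)" using rkT False le by simp
    ultimately show ?thesis using kT by auto
  qed
qed


section \<open>Charts\<close>

lemma poly_sum: "finite I \<Longrightarrow> (\<And>i. i \<in> I \<Longrightarrow> f i \<in> poly_fun) \<Longrightarrow> (\<lambda>v. \<Sum>i\<in>I. f i v) \<in> poly_fun"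
proof (induction I rule: finite_induct)
  case empty then show ?case using pf_const[of 0] by simp
next
  case (insert x F)
  then show ?case using pf_add[of "f x" "\<lambda>v. \<Sum>i\<in>F. f i v"] by simp
qed

lemma poly_prod: "finite I \<Longrightarrow> (\<And>i. i \<in> I \<Longrightarrow> f i \<in> poly_fun) \<Longrightarrow> (\<lambda>v. \<Prod>i\<in>I. f i v) \<in> poly_fun"
proof (induction I rule: finite_induct)
  case empty then show ?case using pf_const[of 1] by simp
next
  case (insert x F)
  then show ?case using pf_mult[of "f x" "\<lambda>v. \<Prod>i\<in>F. f i v"] by simp
qed

definition X0 :: "'a set \<Rightarrow> 'a \<Rightarrow> ('a \<Rightarrow> complex) \<Rightarrow> complex" where
  "X0 A l u = (if l \<in> A then 1 else u l)"
definition X1 :: "'a set \<Rightarrow> 'a \<Rightarrow> ('a \<Rightarrow> complex) \<Rightarrow> complex" where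
  "X1 A l u = (if l \<in> A then u l else 1)"

lemma X0_poly: "X0 A l \<in> poly_fun"
proof (cases "l \<in> A")
  case True then have "X0 A l = (\<lambda>v. 1)" unfolding X0_def by auto
  then show ?thesis using pf_const by metis
next
  case False then have "X0 A l = (\<lambda>v. v l)" unfolding X0_def by auto
  then show ?thesis using pf_var by metis
qed

lemma X1_poly: "X1 A l \<in> poly_fun"
proof (cases "l \<in> A")
  case True then have "X1 A l = (\<lambda>v. v l)" unfolding X1_def by auto
  then show ?thesis using pf_var by metis
next
  case False then have "X1 A l = (\<lambda>v. 1)" unfolding X1_def by auto
  then show ?thesis using pf_const by metis
qed

lemma chart_None:
  assumes "x \<in> chart P A" "l \<in> P" "x l = None"
  shows "X0 A l (ccoord P A x) = 0" "X1 A l (ccoord P A x) = 1" "l \<notin> A"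
  using assms unfolding chart_def X0_def X1_def ccoord_def by auto

lemma chart_Some:
  assumes "x \<in> chart P A" "l \<in> P" "x l = Some v"
  shows "X0 A l (ccoord P A x) \<noteq> 0" "X1 A l (ccoord P A x) = v * X0 A l (ccoord P A x)"
  using assms unfolding chart_def X0_def X1_def ccoord_def by auto

definition cinv :: "(real^'n) set \<Rightarrow> (real^'n) set \<Rightarrow> (real^'n \<Rightarrow> complex) \<Rightarrow> (real^'n \<Rightarrow> complex option)" where
  "cinv P A u = (\<lambda>l. if l \<in> P then (if l \<in> A then Some (u l) else if u l = 0 then None else Some (inverse (u l))) else None)"

lemma cinv_chart: "cinv P A u \<in> chart P A"
  unfolding cinv_def chart_def Pd_def by auto

lemma ccoord_cinv: "u \<in> aff_space P \<Longrightarrow> ccoord P A (cinv P A u) = u"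
  unfolding cinv_def ccoord_def aff_space_def by (rule ext) auto

lemma ccoord_aff: "ccoord P A x \<in> aff_space P"
  unfolding ccoord_def aff_space_def by auto

lemma ccoord_inj:
  assumes "x \<in> chart P A" "z \<in> chart P A" "ccoord P A x = ccoord P A z"
  shows "x = z"
proof (rule ext)
  fix l
  have e: "ccoord P A x l = ccoord P A z l" using assms(3) by simp
  show "x l = z l"
  proof (cases "l \<in> P")
    case False then show ?thesis using assms unfolding chart_def Pd_def by auto
  next
    case True
    show ?thesis
    proof (cases "l \<in> A")
      case True
      then show ?thesis using assms \<open>l \<in> P\<close> e unfolding chart_def ccoord_def by auto
    next
      case False
      then show ?thesis using assms \<open>l \<in> P\<close> e unfolding chart_def ccoord_def
        by (cases "x l"; cases "z l") auto
    qed
  qed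
qed

definition zcl :: "(real^'n) set \<Rightarrow> (real^'n \<Rightarrow> complex option) set \<Rightarrow> bool" where
  "zcl P Z \<longleftrightarrow> Z \<subseteq> Pd P \<and> (\<forall>A\<subseteq>P. \<exists>F\<subseteq>poly_fun. \<forall>x\<in>chart P A. x \<in> Z \<longleftrightarrow> (\<forall>f\<in>F. f (ccoord P A x) = 0))"

lemma zcl_zclosed: assumes "zcl P Z" shows "zclosed P Z"
  unfolding zclosed_def
proof (intro conjI allI impI)
  show "Z \<subseteq> Pd P" using assms unfolding zcl_def by blast
  fix A assume A: "A \<subseteq> P"
  then obtain F where F: "F \<subseteq> poly_fun" "\<forall>x\<in>chart P A. x \<in> Z \<longleftrightarrow> (\<forall>f\<in>F. f (ccoord P A x) = 0)"
    using assms unfolding zcl_def by blast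
  have "ccoord P A ` (Z \<inter> chart P A) = {v \<in> aff_space P. \<forall>f\<in>F. f v = 0}"
  proof
    show "ccoord P A ` (Z \<inter> chart P A) \<subseteq> {v \<in> aff_space P. \<forall>f\<in>F. f v = 0}"
    proof
      fix v assume "v \<in> ccoord P A ` (Z \<inter> chart P A)"
      then obtain x where x: "x \<in> Z" "x \<in> chart P A" "v = ccoord P A x" by blast
      then show "v \<in> {v \<in> aff_space P. \<forall>f\<in>F. f v = 0}" using F(2) ccoord_aff[of P A x] by simp
    qed
    show "{v \<in> aff_space P. \<forall>f\<in>F. f v = 0} \<subseteq> ccoord P A ` (Z \<inter> chart P A)"
    proof
      fix v assume v: "v \<in> {v \<in> aff_space P. \<forall>f\<in>F. f v = 0}"
      have cv: "ccoord P A (cinv P A v) = v" using v ccoord_cinv by blast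
      have "cinv P A v \<in> chart P A" by (rule cinv_chart)
      then have "cinv P A v \<in> Z \<inter> chart P A" using F(2) v cv by simp
      moreover note cv
      ultimately show "v \<in> ccoord P A ` (Z \<inter> chart P A)" by (metis image_eqI)
    qed
  qed
  then show "aff_closed P (ccoord P A ` (Z \<inter> chart P A))"
    unfolding aff_closed_def using F(1) by blast
qed

lemma zclosed_chart:
  assumes "zclosed P Z" "A \<subseteq> P"
  shows "\<exists>F\<subseteq>poly_fun. (\<forall>z\<in>Z \<inter> chart P A. \<forall>f\<in>F. f (ccoord P A z) = 0) \<and>
           (\<forall>x\<in>chart P A. (\<forall>f\<in>F. f (ccoord P A x) = 0) \<longrightarrow> x \<in> Z)"
proof -
  have "aff_closed P (ccoord P A ` (Z \<inter> chart P A))" using assms unfolding zclosed_def by blast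
  then obtain F where F: "F \<subseteq> poly_fun" "ccoord P A ` (Z \<inter> chart P A) = {v \<in> aff_space P. \<forall>f\<in>F. f v = 0}"
    unfolding aff_closed_def by blast
  have h1: "\<forall>z\<in>Z \<inter> chart P A. \<forall>f\<in>F. f (ccoord P A z) = 0"
  proof (intro ballI)
    fix z f assume z: "z \<in> Z \<inter> chart P A" and f: "f \<in> F"
    have "ccoord P A z \<in> ccoord P A ` (Z \<inter> chart P A)" using z by (rule imageI)
    then have "ccoord P A z \<in> {v \<in> aff_space P. \<forall>f\<in>F. f v = 0}" unfolding F(2) .
    then show "f (ccoord P A z) = 0" using f by simp
  qed
  have h2: "\<forall>x\<in>chart P A. (\<forall>f\<in>F. f (ccoord P A x) = 0) \<longrightarrow> x \<in> Z"
  proof (intro ballI impI)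
    fix x assume x: "x \<in> chart P A" and x2: "\<forall>f\<in>F. f (ccoord P A x) = 0"
    have "ccoord P A x \<in> {v \<in> aff_space P. \<forall>f\<in>F. f v = 0}" using x2 ccoord_aff[of P A x] by simp
    then have "ccoord P A x \<in> ccoord P A ` (Z \<inter> chart P A)" unfolding F(2) .
    then obtain z where z: "z \<in> Z \<inter> chart P A" and zx: "ccoord P A x = ccoord P A z" by (rule imageE)
    have "z = x" using ccoord_inj[of z P A x] z x zx by simp
    then show "x \<in> Z" using z by simp
  qed
  show ?thesis using F(1) h1 h2 by blast
qed


lemma zclD: "zcl P Z \<Longrightarrow> A \<subseteq> P \<Longrightarrow> \<exists>F\<subseteq>poly_fun. \<forall>x\<in>chart P A. x \<in> Z \<longleftrightarrow> (\<forall>f\<in>F. f (ccoord P A x) = 0)"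
  unfolding zcl_def by auto

lemma zcl_Int: assumes "zcl P Z1" "zcl P Z2" shows "zcl P (Z1 \<inter> Z2)"
  unfolding zcl_def
proof (intro conjI allI impI)
  show "Z1 \<inter> Z2 \<subseteq> Pd P" using assms unfolding zcl_def by blast
  fix A assume A: "A \<subseteq> P"
  obtain F1 where F1: "F1 \<subseteq> poly_fun" "\<forall>x\<in>chart P A. x \<in> Z1 \<longleftrightarrow> (\<forall>f\<in>F1. f (ccoord P A x) = 0)"
    using zclD[OF assms(1) A] by (elim exE conjE) auto
  obtain F2 where F2: "F2 \<subseteq> poly_fun" "\<forall>x\<in>chart P A. x \<in> Z2 \<longleftrightarrow> (\<forall>f\<in>F2. f (ccoord P A x) = 0)"
    using zclD[OF assms(2) A] by (elim exE conjE) auto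
  have "F1 \<union> F2 \<subseteq> poly_fun" using F1(1) F2(1) by simp
  moreover have "\<forall>x\<in>chart P A. x \<in> Z1 \<inter> Z2 \<longleftrightarrow> (\<forall>f\<in>F1 \<union> F2. f (ccoord P A x) = 0)"
  proof
    fix x assume x: "x \<in> chart P A"
    have "x \<in> Z1 \<longleftrightarrow> (\<forall>f\<in>F1. f (ccoord P A x) = 0)" using F1(2) x by simp
    moreover have "x \<in> Z2 \<longleftrightarrow> (\<forall>f\<in>F2. f (ccoord P A x) = 0)" using F2(2) x by simp
    ultimately show "x \<in> Z1 \<inter> Z2 \<longleftrightarrow> (\<forall>f\<in>F1 \<union> F2. f (ccoord P A x) = 0)" by auto
  qed
  ultimately show "\<exists>F\<subseteq>poly_fun. \<forall>x\<in>chart P A. x \<in> Z1 \<inter> Z2 \<longleftrightarrow> (\<forall>f\<in>F. f (ccoord P A x) = 0)"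
    by blast
qed

lemma zcl_Un: assumes "zcl P Z1" "zcl P Z2" shows "zcl P (Z1 \<union> Z2)"
  unfolding zcl_def
proof (intro conjI allI impI)
  show "Z1 \<union> Z2 \<subseteq> Pd P" using assms unfolding zcl_def by blast
  fix A assume A: "A \<subseteq> P"
  obtain F1 where F1: "F1 \<subseteq> poly_fun" "\<forall>x\<in>chart P A. x \<in> Z1 \<longleftrightarrow> (\<forall>f\<in>F1. f (ccoord P A x) = 0)"
    using zclD[OF assms(1) A] by (elim exE conjE) auto
  obtain F2 where F2: "F2 \<subseteq> poly_fun" "\<forall>x\<in>chart P A. x \<in> Z2 \<longleftrightarrow> (\<forall>f\<in>F2. f (ccoord P A x) = 0)"
    using zclD[OF assms(2) A] by (elim exE conjE) auto
  define F where "F = (\<lambda>(f, g). (\<lambda>v. f v * g v)) ` (F1 \<times> F2)"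
  have "F \<subseteq> poly_fun"
  proof
    fix q assume "q \<in> F"
    then obtain f g where fg: "f \<in> F1" "g \<in> F2" "q = (\<lambda>v. f v * g v)" unfolding F_def by auto
    then show "q \<in> poly_fun" using pf_mult[of f g] F1(1) F2(1) by auto
  qed
  moreover have "\<forall>x\<in>chart P A. x \<in> Z1 \<union> Z2 \<longleftrightarrow> (\<forall>f\<in>F. f (ccoord P A x) = 0)"
  proof
    fix x assume x: "x \<in> chart P A"
    have e1: "x \<in> Z1 \<longleftrightarrow> (\<forall>f\<in>F1. f (ccoord P A x) = 0)" using F1(2) x by simp
    have e2: "x \<in> Z2 \<longleftrightarrow> (\<forall>f\<in>F2. f (ccoord P A x) = 0)" using F2(2) x by simp
    have e3: "(\<forall>f\<in>F. f (ccoord P A x) = 0) \<longleftrightarrow> (\<forall>f\<in>F1. \<forall>g\<in>F2. f (ccoord P A x) * g (ccoord P A x) = 0)"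
      unfolding F_def by auto
    show "x \<in> Z1 \<union> Z2 \<longleftrightarrow> (\<forall>f\<in>F. f (ccoord P A x) = 0)"
      unfolding e3 Un_iff e1 e2 by auto
  qed
  ultimately show "\<exists>F\<subseteq>poly_fun. \<forall>x\<in>chart P A. x \<in> Z1 \<union> Z2 \<longleftrightarrow> (\<forall>f\<in>F. f (ccoord P A x) = 0)"
    by blast
qed

lemma X0_zero_iff:
  assumes "x \<in> chart P A" "l \<in> P"
  shows "X0 A l (ccoord P A x) = 0 \<longleftrightarrow> x l = None"
  using chart_None[OF assms] chart_Some[OF assms] by (cases "x l") auto

definition Zn :: "(real^'n) set \<Rightarrow> (real^'n \<Rightarrow> complex option) set" where
  "Zn P = {x \<in> Pd P. \<exists>l\<in>P. x l = None}"

definition Yset :: "(real^'n) set \<Rightarrow> (real^'n) set \<Rightarrow> (real^'n \<Rightarrow> complex option) set" where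
  "Yset P T = {x \<in> Pd P. \<forall>l\<in>P - T. x l = None}"

definition Lset :: "(real^'n) set \<Rightarrow> nat \<Rightarrow> (real^'n \<Rightarrow> complex option) set" where
  "Lset P c = {x \<in> Pd P. card {l\<in>P. x l \<noteq> None} < c}"

lemma chart_Pd: "x \<in> chart P A \<Longrightarrow> x \<in> Pd P" unfolding chart_def by blast

lemma zcl_Zn: assumes "finite P" shows "zcl P (Zn P)"
  unfolding zcl_def
proof (intro conjI allI impI)
  show "Zn P \<subseteq> Pd P" unfolding Zn_def by blast
  fix A assume A: "A \<subseteq> P"
  define F where "F = {(\<lambda>u. \<Prod>l\<in>P. X0 A l u)}"
  have "(\<lambda>u. \<Prod>l\<in>P. X0 A l u) \<in> poly_fun" by (rule poly_prod[OF assms X0_poly])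
  then have "F \<subseteq> poly_fun" unfolding F_def by auto
  moreover have "\<forall>x\<in>chart P A. x \<in> Zn P \<longleftrightarrow> (\<forall>f\<in>F. f (ccoord P A x) = 0)"
  proof
    fix x assume x: "x \<in> chart P A"
    have "(\<Prod>l\<in>P. X0 A l (ccoord P A x)) = 0 \<longleftrightarrow> (\<exists>l\<in>P. X0 A l (ccoord P A x) = 0)"
      using assms by (rule prod_zero_iff)
    also have "\<dots> \<longleftrightarrow> (\<exists>l\<in>P. x l = None)" using X0_zero_iff[OF x] by auto
    finally show "x \<in> Zn P \<longleftrightarrow> (\<forall>f\<in>F. f (ccoord P A x) = 0)"
      unfolding F_def Zn_def using chart_Pd[OF x] by auto
  qed
  ultimately show "\<exists>F\<subseteq>poly_fun. \<forall>x\<in>chart P A. x \<in> Zn P \<longleftrightarrow> (\<forall>f\<in>F. f (ccoord P A x) = 0)"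
    by blast
qed

lemma zcl_Yset: shows "zcl P (Yset P T)"
  unfolding zcl_def
proof (intro conjI allI impI)
  show "Yset P T \<subseteq> Pd P" unfolding Yset_def by blast
  fix A assume A: "A \<subseteq> P"
  define F where "F = (\<lambda>l. X0 A l) ` (P - T)"
  have "F \<subseteq> poly_fun" unfolding F_def using X0_poly by auto
  moreover have "\<forall>x\<in>chart P A. x \<in> Yset P T \<longleftrightarrow> (\<forall>f\<in>F. f (ccoord P A x) = 0)"
  proof
    fix x assume x: "x \<in> chart P A"
    show "x \<in> Yset P T \<longleftrightarrow> (\<forall>f\<in>F. f (ccoord P A x) = 0)"
      unfolding F_def Yset_def using chart_Pd[OF x] X0_zero_iff[OF x] by auto
  qed
  ultimately show "\<exists>F\<subseteq>poly_fun. \<forall>x\<in>chart P A. x \<in> Yset P T \<longleftrightarrow> (\<forall>f\<in>F. f (ccoord P A x) = 0)"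
    by blast
qed

lemma zcl_Lset: assumes "finite P" shows "zcl P (Lset P c)"
  unfolding zcl_def
proof (intro conjI allI impI)
  show "Lset P c \<subseteq> Pd P" unfolding Lset_def by blast
  fix A assume A: "A \<subseteq> P"
  define F where "F = (\<lambda>D. (\<lambda>u. \<Prod>l\<in>D. X0 A l u)) ` {D. D \<subseteq> P \<and> card D = c}"
  have "F \<subseteq> poly_fun"
  proof
    fix q assume "q \<in> F"
    then obtain D where D: "D \<subseteq> P" "q = (\<lambda>u. \<Prod>l\<in>D. X0 A l u)" unfolding F_def by auto
    have "finite D" using D(1) assms finite_subset by blast
    then show "q \<in> poly_fun" unfolding D(2) by (rule poly_prod[OF _ X0_poly])
  qed
  moreover have "\<forall>x\<in>chart P A. x \<in> Lset P c \<longleftrightarrow> (\<forall>f\<in>F. f (ccoord P A x) = 0)"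
  proof
    fix x assume x: "x \<in> chart P A"
    define Fin where "Fin = {l\<in>P. x l \<noteq> None}"
    have fF: "finite Fin" unfolding Fin_def using assms by simp
    have pz: "(\<Prod>l\<in>D. X0 A l (ccoord P A x)) = 0 \<longleftrightarrow> (\<exists>l\<in>D. x l = None)" if "D \<subseteq> P" for D
    proof -
      have "finite D" using that assms finite_subset by blast
      then have "(\<Prod>l\<in>D. X0 A l (ccoord P A x)) = 0 \<longleftrightarrow> (\<exists>l\<in>D. X0 A l (ccoord P A x) = 0)"
        by (rule prod_zero_iff)
      also have "\<dots> \<longleftrightarrow> (\<exists>l\<in>D. x l = None)" using X0_zero_iff[OF x] that by auto
      finally show ?thesis .
    qed
    have "card Fin < c \<longleftrightarrow> (\<forall>D. D \<subseteq> P \<and> card D = c \<longrightarrow> (\<exists>l\<in>D. x l = None))"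
    proof
      assume H: "card Fin < c"
      show "\<forall>D. D \<subseteq> P \<and> card D = c \<longrightarrow> (\<exists>l\<in>D. x l = None)"
      proof (intro allI impI)
        fix D assume D: "D \<subseteq> P \<and> card D = c"
        show "\<exists>l\<in>D. x l = None"
        proof (rule ccontr)
          assume "\<not> (\<exists>l\<in>D. x l = None)"
          then have "D \<subseteq> Fin" using D unfolding Fin_def by auto
          then have "card D \<le> card Fin" using fF card_mono by blast
          then show False using H D by simp
        qed
      qed
    next
      assume H: "\<forall>D. D \<subseteq> P \<and> card D = c \<longrightarrow> (\<exists>l\<in>D. x l = None)"
      show "card Fin < c"
      proof (rule ccontr)
        assume "\<not> card Fin < c"
        then obtain D where D: "D \<subseteq> Fin" "card D = c" using obtain_subset_with_card_n[of c Fin] by auto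
        then have "D \<subseteq> P" unfolding Fin_def by auto
        then obtain l where "l \<in> D" "x l = None" using H D by blast
        then show False using D unfolding Fin_def by auto
      qed
    qed
    also have "\<dots> \<longleftrightarrow> (\<forall>f\<in>F. f (ccoord P A x) = 0)"
      unfolding F_def using pz by auto
    finally show "x \<in> Lset P c \<longleftrightarrow> (\<forall>f\<in>F. f (ccoord P A x) = 0)"
      unfolding Lset_def Fin_def using chart_Pd[OF x] by auto
  qed
  ultimately show "\<exists>F\<subseteq>poly_fun. \<forall>x\<in>chart P A. x \<in> Lset P c \<longleftrightarrow> (\<forall>f\<in>F. f (ccoord P A x) = 0)"
    by blast
qed

definition Gc :: "(real^'n) set \<Rightarrow> (real^'n \<Rightarrow> real) \<Rightarrow> (real^'n \<Rightarrow> complex option) \<Rightarrow> bool" where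
  "Gc P c x \<longleftrightarrow>
    ({l\<in>P. c l \<noteq> 0} \<inter> {l\<in>P. x l = None} = {} \<longrightarrow>
        (\<Sum>l\<in>{l\<in>P. c l \<noteq> 0}. complex_of_real (c l) * the (x l)) = 0) \<and>
    (\<forall>m. {l\<in>P. c l \<noteq> 0} \<inter> {l\<in>P. x l = None} \<noteq> {m})"

definition Ec :: "(real^'n) set \<Rightarrow> (real^'n) set \<Rightarrow> (real^'n \<Rightarrow> real) \<Rightarrow> (real^'n \<Rightarrow> complex) \<Rightarrow> complex" where
  "Ec P A c u = (\<Sum>l\<in>{l\<in>P. c l \<noteq> 0}. complex_of_real (c l) * X1 A l u *
                    (\<Prod>m\<in>{l\<in>P. c l \<noteq> 0} - {l}. X0 A m u))"

lemma Ec_poly: assumes "finite P" shows "Ec P A c \<in> poly_fun"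
proof -
  let ?D = "{l\<in>P. c l \<noteq> 0}"
  have fD: "finite ?D" using assms by simp
  have t: "(\<lambda>u. complex_of_real (c l) * X1 A l u * (\<Prod>m\<in>?D - {l}. X0 A m u)) \<in> poly_fun" for l
  proof -
    have a: "(\<lambda>u. complex_of_real (c l) * X1 A l u) \<in> poly_fun"
      using pf_mult[OF pf_const X1_poly] .
    have b: "(\<lambda>u. \<Prod>m\<in>?D - {l}. X0 A m u) \<in> poly_fun"
      by (rule poly_prod[OF _ X0_poly]) (use fD in simp)
    show ?thesis using pf_mult[OF a b] .
  qed
  have "(\<lambda>u. \<Sum>l\<in>?D. complex_of_real (c l) * X1 A l u * (\<Prod>m\<in>?D - {l}. X0 A m u)) \<in> poly_fun"
    by (rule poly_sum[OF fD t])
  then show ?thesis unfolding Ec_def[abs_def] .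
qed

lemma Ec_iff:
  assumes fP: "finite P" and x: "x \<in> chart P A"
  shows "Ec P A c (ccoord P A x) = 0 \<longleftrightarrow> Gc P c x"
proof -
  define D where "D = {l\<in>P. c l \<noteq> 0}"
  define N where "N = {l\<in>P. x l = None}"
  define u where "u = ccoord P A x"
  define w where "w l = X0 A l u" for l
  define z where "z l = X1 A l u" for l
  define v where "v l = the (x l)" for l
  have fD: "finite D" unfolding D_def using fP by simp
  have DP: "D \<subseteq> P" unfolding D_def by auto
  have cD: "l \<in> D \<Longrightarrow> c l \<noteq> 0" for l unfolding D_def by auto
  have good: "w l \<noteq> 0 \<and> z l = v l * w l" if lD: "l \<in> D" "l \<notin> N" for l
  proof -
    have "l \<in> P" using lD DP by auto
    then obtain a where "x l = Some a" using lD unfolding N_def by auto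
    then show ?thesis using chart_Some[OF x \<open>l \<in> P\<close>] unfolding w_def z_def v_def u_def by auto
  qed
  have bad: "w l = 0 \<and> z l = 1" if "l \<in> D" "l \<in> N" for l
  proof -
    have "l \<in> P" "x l = None" using that DP unfolding N_def by auto
    then show ?thesis using chart_None[OF x] unfolding w_def z_def u_def by auto
  qed
  have E: "Ec P A c u = (\<Sum>l\<in>D. complex_of_real (c l) * z l * (\<Prod>m\<in>D - {l}. w m))"
    unfolding Ec_def D_def w_def z_def by simp
  have G: "Gc P c x \<longleftrightarrow> (D \<inter> N = {} \<longrightarrow> (\<Sum>l\<in>D. complex_of_real (c l) * v l) = 0) \<and> (\<forall>m. D \<inter> N \<noteq> {m})"
    unfolding Gc_def D_def N_def v_def by simp
  consider (e) "D \<inter> N = {}" | (s) m where "D \<inter> N = {m}" | (b) "D \<inter> N \<noteq> {}" "\<forall>m. D \<inter> N \<noteq> {m}" by blast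
  then show ?thesis
  proof cases
    case e
    have "(\<Sum>l\<in>D. complex_of_real (c l) * z l * (\<Prod>m\<in>D - {l}. w m))
          = (\<Sum>l\<in>D. complex_of_real (c l) * v l * (\<Prod>m\<in>D. w m))"
    proof (rule sum.cong[OF refl])
      fix l assume l: "l \<in> D"
      have "(\<Prod>m\<in>D. w m) = w l * (\<Prod>m\<in>D - {l}. w m)" using prod.remove[OF fD l] .
      then show "complex_of_real (c l) * z l * (\<Prod>m\<in>D - {l}. w m) = complex_of_real (c l) * v l * (\<Prod>m\<in>D. w m)"
        using good[OF l] e l by auto
    qed
    also have "\<dots> = (\<Sum>l\<in>D. complex_of_real (c l) * v l) * (\<Prod>m\<in>D. w m)"
      by (simp add: sum_distrib_right)
    finally have E2: "Ec P A c u = (\<Sum>l\<in>D. complex_of_real (c l) * v l) * (\<Prod>m\<in>D. w m)" using E by simp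
    have "(\<Prod>m\<in>D. w m) \<noteq> 0" using fD good e by (auto simp: prod_zero_iff)
    then show ?thesis using E2 G e unfolding u_def by auto
  next
    case s
    then have mD: "m \<in> D" "m \<in> N" by auto
    have z0: "complex_of_real (c l) * z l * (\<Prod>m\<in>D - {l}. w m) = 0" if "l \<in> D - {m}" for l
    proof -
      have "m \<in> D - {l}" using that mD by auto
      moreover have "w m = 0" using bad mD by auto
      ultimately have "(\<Prod>m\<in>D - {l}. w m) = 0" using fD by (auto simp: prod_zero_iff)
      then show ?thesis by simp
    qed
    have "(\<Sum>l\<in>D. complex_of_real (c l) * z l * (\<Prod>m\<in>D - {l}. w m))
        = complex_of_real (c m) * z m * (\<Prod>m\<in>D - {m}. w m) + (\<Sum>l\<in>D - {m}. complex_of_real (c l) * z l * (\<Prod>m\<in>D - {l}. w m))"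
      using sum.remove[OF fD mD(1)] .
    also have "(\<Sum>l\<in>D - {m}. complex_of_real (c l) * z l * (\<Prod>m\<in>D - {l}. w m)) = 0"
      by (rule sum.neutral) (use z0 in blast)
    finally have E2: "Ec P A c u = complex_of_real (c m) * (\<Prod>m\<in>D - {m}. w m)"
      using E bad[OF mD] by simp
    have "(\<Prod>m\<in>D - {m}. w m) \<noteq> 0"
    proof -
      have "\<forall>l\<in>D - {m}. w l \<noteq> 0" using good s by blast
      then show ?thesis using fD by (auto simp: prod_zero_iff)
    qed
    moreover have "c m \<noteq> 0" using cD mD by blast
    ultimately have "Ec P A c u \<noteq> 0" using E2 by simp
    then show ?thesis using G s unfolding u_def by auto
  next
    case b
    have z0: "complex_of_real (c l) * z l * (\<Prod>m\<in>D - {l}. w m) = 0" if "l \<in> D" for l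
    proof -
      obtain m where m: "m \<in> D \<inter> N" "m \<noteq> l"
      proof -
        obtain m1 where m1: "m1 \<in> D \<inter> N" using b by blast
        show ?thesis
        proof (cases "m1 = l")
          case False then show ?thesis using that m1 by blast
        next
          case True
          have "D \<inter> N \<noteq> {l}" using b by blast
          then obtain m2 where "m2 \<in> D \<inter> N" "m2 \<noteq> l" using m1 True by blast
          then show ?thesis using that by blast
        qed
      qed
      have "m \<in> D - {l}" using m by auto
      moreover have "w m = 0" using bad m by auto
      ultimately have "(\<Prod>m\<in>D - {l}. w m) = 0" using fD by (auto simp: prod_zero_iff)
      then show ?thesis by simp
    qed
    have "Ec P A c u = 0" using E z0 by simp
    then show ?thesis using G b unfolding u_def by auto
  qed
qed

definition Zrel :: "(real^'n) set \<Rightarrow> (real^'n \<Rightarrow> complex option) set" where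
  "Zrel P = {x \<in> Pd P. \<forall>c. (\<Sum>l\<in>P. c l *\<^sub>R l) = 0 \<longrightarrow> Gc P c x}"

lemma zcl_Zrel: assumes fP: "finite P" shows "zcl P (Zrel P)"
  unfolding zcl_def
proof (intro conjI allI impI)
  show "Zrel P \<subseteq> Pd P" unfolding Zrel_def by blast
  fix A assume A: "A \<subseteq> P"
  define F where "F = (\<lambda>c. Ec P A c) ` {c. (\<Sum>l\<in>P. c l *\<^sub>R l) = 0}"
  have "F \<subseteq> poly_fun" unfolding F_def using Ec_poly[OF fP] by auto
  moreover have "\<forall>x\<in>chart P A. x \<in> Zrel P \<longleftrightarrow> (\<forall>f\<in>F. f (ccoord P A x) = 0)"
  proof
    fix x assume x: "x \<in> chart P A"
    show "x \<in> Zrel P \<longleftrightarrow> (\<forall>f\<in>F. f (ccoord P A x) = 0)"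
      unfolding F_def Zrel_def using chart_Pd[OF x] Ec_iff[OF fP x] by auto
  qed
  ultimately show "\<exists>F\<subseteq>poly_fun. \<forall>x\<in>chart P A. x \<in> Zrel P \<longleftrightarrow> (\<forall>f\<in>F. f (ccoord P A x) = 0)"
    by blast
qed


lemma pos_sub: "positive_system R P \<Longrightarrow> P \<subseteq> R"
  unfolding positive_system_def by auto

lemma pos_finite: "root_system R \<Longrightarrow> positive_system R P \<Longrightarrow> finite P"
  using pos_sub unfolding root_system_def by (meson finite_subset)

lemma pos_cover: "root_system R \<Longrightarrow> positive_system R P \<Longrightarrow> a \<in> R \<Longrightarrow> a \<in> P \<or> - a \<in> P"
  unfolding positive_system_def using rs_neg[of R a]
  by (auto simp: inner_minus_right)

lemma flat_eq:
  assumes R: "root_system R" and Pp: "positive_system R P"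
    and S1: "flat R S1" and S2: "flat R S2" and e: "P \<inter> S1 = P \<inter> S2"
  shows "S1 = S2"
proof -
  have "a \<in> S2" if "a \<in> S1" "flat R S1" "flat R S2" "P \<inter> S1 = P \<inter> S2" for a S1 S2
  proof -
    have aR: "a \<in> R" using that unfolding flat_def by blast
    show ?thesis
    proof (cases "a \<in> P")
      case True then show ?thesis using that by blast
    next
      case False
      then have "- a \<in> P" using pos_cover[OF R Pp aR] by blast
      moreover have "- a \<in> S1" using flat_neg[OF R that(2) that(1)] .
      ultimately have "- a \<in> S2" using that by blast
      then show ?thesis using flat_neg[OF R that(3), of "- a"] by simp
    qed
  qed
  then show ?thesis using S1 S2 e by blast
qed

lemma sum_nz: "finite P \<Longrightarrow> (\<Sum>l\<in>{l\<in>P. c l \<noteq> 0}. complex_of_real (c l) * g l) = (\<Sum>l\<in>P. complex_of_real (c l) * g l)"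
  by (rule sum.mono_neutral_left) auto

lemma Cring_sub_Zrel:
  assumes R: "root_system R" and Pp: "positive_system R P" and S: "flat R S"
  shows "Cring P S \<subseteq> Zrel P"
proof
  fix x assume x: "x \<in> Cring P S"
  have fP: "finite P" using pos_finite[OF R Pp] .
  obtain h where h: "\<forall>l\<in>P \<inter> S. x l = Some (pairing l h)" using x unfolding Cring_def by blast
  have xN: "\<forall>l\<in>P - S. x l = None" using x unfolding Cring_def by blast
  have N: "{l\<in>P. x l = None} = P - S" using h xN by auto
  show "x \<in> Zrel P" unfolding Zrel_def
  proof (intro CollectI conjI allI impI)
    show "x \<in> Pd P" using x unfolding Cring_def by blast
    fix c assume c: "(\<Sum>l\<in>P. c l *\<^sub>R l) = 0"
    let ?D = "{l\<in>P. c l \<noteq> 0}"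
    show "Gc P c x" unfolding Gc_def N
    proof (intro conjI impI allI)
      assume e: "?D \<inter> (P - S) = {}"
      have "(\<Sum>l\<in>?D. complex_of_real (c l) * the (x l)) = (\<Sum>l\<in>?D. complex_of_real (c l) * pairing l h)"
        using e h by (intro sum.cong) auto
      also have "\<dots> = (\<Sum>l\<in>P. complex_of_real (c l) * pairing l h)" using sum_nz[OF fP] .
      also have "\<dots> = pairing (\<Sum>l\<in>P. c l *\<^sub>R l) h" by (simp add: pairing_sum_left pairing_scale_left)
      also have "\<dots> = 0" using c by simp
      finally show "(\<Sum>l\<in>?D. complex_of_real (c l) * the (x l)) = 0" .
    next
      fix m show "?D \<inter> (P - S) \<noteq> {m}"
      proof
        assume m: "?D \<inter> (P - S) = {m}"
        then have mP: "m \<in> P" "c m \<noteq> 0" "m \<notin> S" by auto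
        have "(\<Sum>l\<in>P. c l *\<^sub>R l) = c m *\<^sub>R m + (\<Sum>l\<in>P - {m}. c l *\<^sub>R l)"
          using sum.remove[OF fP mP(1)] .
        then have eq: "c m *\<^sub>R m = - (\<Sum>l\<in>P - {m}. c l *\<^sub>R l)" using c by (simp add: eq_neg_iff_add_eq_0)
        have "(\<Sum>l\<in>P - {m}. c l *\<^sub>R l) \<in> span S"
        proof (rule span_sum)
          fix l assume l: "l \<in> P - {m}"
          show "c l *\<^sub>R l \<in> span S"
          proof (cases "c l = 0")
            case True then show ?thesis by (simp add: span_zero)
          next
            case False
            then have "l \<in> S" using m l by auto
            then show ?thesis by (intro span_scale span_base)
          qed
        qed
        then have "c m *\<^sub>R m \<in> span S" using eq span_neg by simp
        then have "(1 / c m) *\<^sub>R (c m *\<^sub>R m) \<in> span S" by (rule span_scale)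
        then have "m \<in> span S" using mP by simp
        moreover have "m \<in> R" using mP pos_sub[OF Pp] by blast
        ultimately show False using S mP unfolding flat_def by blast
      qed
    qed
  qed
qed

lemma relation_exists:
  fixes F :: "(real^'n) set"
  assumes fP: "finite P" and FP: "F \<subseteq> P" and l: "l \<in> P" "l \<notin> F" "l \<in> span F"
  obtains a where "(\<Sum>k\<in>P. ((if k \<in> F then a k else 0) - (if k = l then 1 else 0)) *\<^sub>R k) = 0"
proof -
  have fF: "finite F" using fP FP finite_subset by blast
  obtain a where a: "l = (\<Sum>v\<in>F. a v *\<^sub>R v)" using l(3) span_finite[OF fF] by blast
  have "(\<Sum>k\<in>P. ((if k \<in> F then a k else 0) - (if k = l then 1 else 0)) *\<^sub>R k)
      = (\<Sum>k\<in>P. (if k \<in> F then a k *\<^sub>R k else 0)) - (\<Sum>k\<in>P. (if k = l then k else 0))"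
    unfolding sum_subtractf[symmetric] by (rule sum.cong) (auto simp: scaleR_diff_left)
  also have "(\<Sum>k\<in>P. (if k \<in> F then a k *\<^sub>R k else 0)) = (\<Sum>k\<in>F. a k *\<^sub>R k)"
    using sum.inter_restrict[OF fP, of "\<lambda>k. a k *\<^sub>R k" F] FP by (simp add: Int_absorb1)
  also have "(\<Sum>k\<in>P. (if k = l then k else 0)) = l" using l(1) fP by simp
  finally show ?thesis using a that by simp
qed

lemma Zrel_sub_Cring:
  assumes R: "root_system R" and Pp: "positive_system R P" and x: "x \<in> Zrel P"
  shows "\<exists>S. flat R S \<and> x \<in> Cring P S"
proof -
  have fP: "finite P" using pos_finite[OF R Pp] .
  have PR: "P \<subseteq> R" using pos_sub[OF Pp] .
  have xPd: "x \<in> Pd P" and G: "\<And>c. (\<Sum>l\<in>P. c l *\<^sub>R l) = 0 \<Longrightarrow> Gc P c x"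
    using x unfolding Zrel_def by auto
  define F where "F = {l\<in>P. x l \<noteq> None}"
  define N where "N = {l\<in>P. x l = None}"
  have FP: "F \<subseteq> P" unfolding F_def by auto
  have fF: "finite F" using fP FP finite_subset by blast
  define S where "S = R \<inter> span F"
  have flatS: "flat R S"
  proof -
    have "span S \<subseteq> span F" unfolding S_def by (metis inf_le2 span_mono span_span)
    then show ?thesis unfolding flat_def S_def by blast
  qed
  have single: False if "(\<Sum>l\<in>P. c l *\<^sub>R l) = 0" "{l\<in>P. c l \<noteq> 0} \<inter> N = {m}" for c m
    using G[OF that(1)] that(2) unfolding Gc_def N_def by blast
  have PS: "P \<inter> S = F"
  proof
    show "F \<subseteq> P \<inter> S" unfolding S_def using FP PR span_base by blast
    show "P \<inter> S \<subseteq> F"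
    proof
      fix l assume l: "l \<in> P \<inter> S"
      show "l \<in> F"
      proof (rule ccontr)
        assume lF: "l \<notin> F"
        have "l \<in> span F" using l unfolding S_def by blast
        then obtain a where a: "(\<Sum>k\<in>P. ((if k \<in> F then a k else 0) - (if k = l then 1 else 0)) *\<^sub>R k) = 0"
          using relation_exists[OF fP FP _ lF] l by blast
        have "{k\<in>P. (if k \<in> F then a k else 0) - (if k = l then 1 else 0) \<noteq> 0} \<inter> N = {l}"
          using l lF unfolding N_def F_def by auto
        then show False using single[OF a] by blast
      qed
    qed
  qed
  obtain B where B: "B \<subseteq> F" "independent B" "F \<subseteq> span B" "card B = dim F"
    using basis_exists[of F] by blast
  obtain h where h: "\<forall>b\<in>B. pairing b h = the (x b)" using solve_indep[OF B(2), of "\<lambda>b. the (x b)"] by blast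
  have val: "the (x l) = pairing l h" if lF: "l \<in> F" for l
  proof (cases "l \<in> B")
    case True then show ?thesis using h by simp
  next
    case False
    have lP: "l \<in> P" using lF FP by auto
    have BP: "B \<subseteq> P" using B FP by auto
    have fB: "finite B" using fF B(1) finite_subset by blast
    obtain a where a: "l = (\<Sum>v\<in>B. a v *\<^sub>R v)" using B(3) lF span_finite[OF fB] by blast
    define c where "c k = (if k \<in> B then a k else 0) - (if k = l then 1 else 0)" for k
    have c0: "(\<Sum>k\<in>P. c k *\<^sub>R k) = 0"
    proof -
      have "(\<Sum>k\<in>P. c k *\<^sub>R k) = (\<Sum>k\<in>P. (if k \<in> B then a k *\<^sub>R k else 0)) - (\<Sum>k\<in>P. (if k = l then k else 0))"
        unfolding sum_subtractf[symmetric] c_def by (rule sum.cong) (auto simp: scaleR_diff_left)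
      also have "(\<Sum>k\<in>P. (if k \<in> B then a k *\<^sub>R k else 0)) = (\<Sum>k\<in>B. a k *\<^sub>R k)"
        using sum.inter_restrict[OF fP, of "\<lambda>k. a k *\<^sub>R k" B] BP by (simp add: Int_absorb1)
      also have "(\<Sum>k\<in>P. (if k = l then k else 0)) = l" using lP fP by simp
      finally show ?thesis using a by simp
    qed
    have DN: "{k\<in>P. c k \<noteq> 0} \<inter> N = {}"
      using B(1) lF unfolding c_def N_def F_def by auto
    have "(\<Sum>k\<in>{k\<in>P. c k \<noteq> 0}. complex_of_real (c k) * the (x k)) = 0"
      using G[OF c0] DN unfolding Gc_def N_def by blast
    then have s0: "(\<Sum>k\<in>P. complex_of_real (c k) * the (x k)) = 0" using sum_nz[OF fP] by simp
    have "(\<Sum>k\<in>P. complex_of_real (c k) * the (x k))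
        = (\<Sum>k\<in>P. (if k \<in> B then complex_of_real (a k) * the (x k) else 0)) - (\<Sum>k\<in>P. (if k = l then the (x k) else 0))"
      unfolding sum_subtractf[symmetric] c_def by (rule sum.cong) (auto simp: algebra_simps)
    also have "(\<Sum>k\<in>P. (if k \<in> B then complex_of_real (a k) * the (x k) else 0)) = (\<Sum>k\<in>B. complex_of_real (a k) * the (x k))"
      using sum.inter_restrict[OF fP, of "\<lambda>k. complex_of_real (a k) * the (x k)" B] BP by (simp add: Int_absorb1)
    also have "(\<Sum>k\<in>P. (if k = l then the (x k) else 0)) = the (x l)" using lP fP by simp
    finally have "the (x l) = (\<Sum>k\<in>B. complex_of_real (a k) * the (x k))" using s0 by simp
    also have "\<dots> = (\<Sum>k\<in>B. complex_of_real (a k) * pairing k h)" using h by simp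
    also have "\<dots> = pairing l h" unfolding a by (simp add: pairing_sum_left pairing_scale_left)
    finally show ?thesis .
  qed
  have "x \<in> Cring P S"
    unfolding Cring_def
  proof (intro CollectI conjI ballI exI)
    show "x \<in> Pd P" by fact
    fix l assume "l \<in> P - S" then show "x l = None" using PS unfolding F_def by auto
  next
    fix l assume l: "l \<in> P \<inter> S"
    then have "l \<in> F" using PS by simp
    then have "x l \<noteq> None" unfolding F_def by simp
    then show "x l = Some (pairing l h)" using val[OF \<open>l \<in> F\<close>] by auto
  qed
  then show ?thesis using flatS by blast
qed


lemma poly_tendsto:
  assumes "f \<in> poly_fun" "\<And>i. ((\<lambda>s. g s i) \<longlongrightarrow> g0 i) F"
  shows "((\<lambda>s. f (g s)) \<longlongrightarrow> f g0) F"
  using assms(1)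
proof (induction rule: poly_fun.induct)
  case (pf_const c) then show ?case by simp
next
  case (pf_var i) then show ?case using assms(2) by simp
next
  case (pf_add p q) then show ?case by (intro tendsto_add)
next
  case (pf_mult p q) then show ?case by (intro tendsto_mult)
qed

lemma avoid_hyperplanes:
  fixes W :: "'a::real_inner set"
  assumes "finite V" "subspace W" "\<forall>v\<in>V. v \<noteq> 0 \<and> v \<in> W"
  shows "\<exists>y\<in>W. \<forall>v\<in>V. y \<bullet> v \<noteq> 0"
  using assms(1,3)
proof (induction V rule: finite_induct)
  case empty then show ?case using subspace_0[OF assms(2)] by blast
next
  case (insert v V)
  then obtain y0 where y0: "y0 \<in> W" "\<forall>u\<in>V. y0 \<bullet> u \<noteq> 0" by auto
  have vW: "v \<in> W" "v \<noteq> 0" using insert by auto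
  show ?case
  proof (cases "y0 \<bullet> v = 0")
    case False then show ?thesis using y0 by blast
  next
    case True
    define bad where "bad = insert 0 ((\<lambda>u. - (y0 \<bullet> u) / (v \<bullet> u)) ` V)"
    have "finite bad" unfolding bad_def using insert by simp
    then obtain e :: real where e: "e \<notin> bad" using ex_new_if_finite[OF infinite_UNIV_char_0] by blast
    define y where "y = y0 + e *\<^sub>R v"
    have yW: "y \<in> W" unfolding y_def using y0(1) vW(1) assms(2) by (simp add: subspace_add subspace_scale)
    have "y \<bullet> v \<noteq> 0"
    proof -
      have "y \<bullet> v = e * (v \<bullet> v)" unfolding y_def using True by (simp add: inner_add_left)
      moreover have "e \<noteq> 0" using e unfolding bad_def by auto
      ultimately show ?thesis using vW(2) by simp
    qed
    moreover have "y \<bullet> u \<noteq> 0" if u: "u \<in> V" for u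
    proof
      assume H: "y \<bullet> u = 0"
      have yu: "y \<bullet> u = y0 \<bullet> u + e * (v \<bullet> u)" unfolding y_def by (simp add: inner_add_left)
      show False
      proof (cases "v \<bullet> u = 0")
        case True then show False using H yu y0(2) u by simp
      next
        case False
        then have "e = - (y0 \<bullet> u) / (v \<bullet> u)" using H yu by (simp add: field_simps)
        then show False using e u unfolding bad_def by auto
      qed
    qed
    ultimately show ?thesis using yW by blast
  qed
qed

lemma generic_direction:
  fixes S :: "(real^'n) set"
  assumes fV: "finite V" and V: "\<forall>l\<in>V. l \<notin> span S"
  shows "\<exists>y. (\<forall>s\<in>S. s \<bullet> y = 0) \<and> (\<forall>l\<in>V. l \<bullet> y \<noteq> 0)"
proof -
  define W where "W = {w. \<forall>s\<in>S. s \<bullet> w = 0}"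
  have sW: "subspace W" unfolding W_def subspace_def by (simp add: inner_add_right)
  have orth: "a \<bullet> y = 0" if "a \<in> span S" "y \<in> W" for a y
  proof -
    have "subspace {a. a \<bullet> y = 0}" unfolding subspace_def by (simp add: inner_add_left)
    moreover have "S \<subseteq> {a. a \<bullet> y = 0}" using that(2) unfolding W_def by auto
    ultimately have "span S \<subseteq> {a. a \<bullet> y = 0}" by (rule span_minimal[rotated])
    then show ?thesis using that(1) by blast
  qed
  have "\<exists>z. z \<noteq> 0 \<and> z \<in> W \<and> (\<forall>y\<in>W. l \<bullet> y = z \<bullet> y)" if l: "l \<in> V" for l
  proof -
    obtain a z where az: "a \<in> span S" "\<And>w. w \<in> span S \<Longrightarrow> orthogonal z w" "l = a + z"
      using orthogonal_subspace_decomp_exists[of S l] by metis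
    have "z \<in> W" unfolding W_def using az(2) span_base by (auto simp: orthogonal_def inner_commute)
    moreover have "z \<noteq> 0" using az V l by auto
    moreover have "\<forall>y\<in>W. l \<bullet> y = z \<bullet> y" using orth az(1,3) by (simp add: inner_add_left)
    ultimately show ?thesis by blast
  qed
  then obtain zf where zf: "\<forall>l\<in>V. zf l \<noteq> 0 \<and> zf l \<in> W \<and> (\<forall>y\<in>W. l \<bullet> y = zf l \<bullet> y)"
    by metis
  have "\<exists>y\<in>W. \<forall>v\<in>zf ` V. y \<bullet> v \<noteq> 0"
    by (rule avoid_hyperplanes) (use fV sW zf in auto)
  then obtain y where y: "y \<in> W" "\<forall>l\<in>V. y \<bullet> zf l \<noteq> 0" by auto
  have "\<forall>l\<in>V. l \<bullet> y \<noteq> 0" using y zf by (auto simp: inner_commute)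
  then show ?thesis using y(1) unfolding W_def by blast
qed

lemma pairing_tscale: "pairing l (\<chi> i. t * complex_of_real (y $ i)) = t * complex_of_real (l \<bullet> y)"
  unfolding pairing_def inner_vec_def by (simp add: sum_distrib_left algebra_simps)

lemma Cring_sub_closed:
  assumes R: "root_system R" and Pp: "positive_system R P" and S: "flat R S"
    and Z: "zclosed P Z" and hZ: "hset P \<subseteq> Z"
  shows "Cring P S \<subseteq> Z"
proof
  fix x assume x: "x \<in> Cring P S"
  have fP: "finite P" using pos_finite[OF R Pp] .
  have PR: "P \<subseteq> R" using pos_sub[OF Pp] .
  obtain h where h: "\<forall>l\<in>P \<inter> S. x l = Some (pairing l h)" using x unfolding Cring_def by blast
  have xN: "\<forall>l\<in>P - S. x l = None" and xPd: "x \<in> Pd P" using x unfolding Cring_def by blast+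
  define A where "A = P \<inter> S"
  have AP: "A \<subseteq> P" unfolding A_def by blast
  have xc: "x \<in> chart P A" unfolding chart_def A_def using xPd h xN by auto
  have "\<forall>l\<in>P - S. l \<notin> span S" using S PR unfolding flat_def by blast
  then obtain y where y0: "\<forall>s\<in>S. s \<bullet> y = 0" and y1: "\<forall>l\<in>P - S. l \<bullet> y \<noteq> 0"
    using generic_direction[of "P - S" S] fP by blast
  define b where "b l = complex_of_real (l \<bullet> y)" for l
  define g where "g s = (\<lambda>l. if l \<in> P then (if l \<in> A then pairing l h else s / (pairing l h * s + b l)) else 0)" for s :: complex
  have g0: "g 0 = ccoord P A x"
    unfolding g_def ccoord_def A_def using h xN by (intro ext) auto
  obtain F where F: "F \<subseteq> poly_fun" "\<forall>z\<in>Z \<inter> chart P A. \<forall>f\<in>F. f (ccoord P A z) = 0"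
    "\<forall>x\<in>chart P A. (\<forall>f\<in>F. f (ccoord P A x) = 0) \<longrightarrow> x \<in> Z"
    using zclosed_chart[OF Z AP] by blast
  have gs: "\<forall>f\<in>F. f (g s) = 0" if s: "s \<noteq> 0" "\<forall>l\<in>P - A. pairing l h * s + b l \<noteq> 0" for s
  proof -
    define q where "q = emb P (h + (\<chi> i. (1/s) * complex_of_real (y $ i)))"
    have ql: "q l = (if l \<in> P then Some (pairing l h + b l / s) else None)" for l
      unfolding q_def emb_def pairing_add_right pairing_tscale b_def by simp
    have qhZ: "q \<in> Z" using hZ unfolding hset_def q_def by blast
    have nz: "pairing l h + b l / s \<noteq> 0" if "l \<in> P - A" for l
    proof
      assume "pairing l h + b l / s = 0"
      then have "pairing l h * s + b l = 0" using s(1) by (simp add: field_simps)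
      then show False using s(2) that by blast
    qed
    have bA: "b l = 0" if "l \<in> A" for l using y0 that unfolding b_def A_def by auto
    have qc: "q \<in> chart P A" unfolding chart_def Pd_def using ql nz AP by auto
    have "ccoord P A q = g s"
    proof (rule ext)
      fix l
      show "ccoord P A q l = g s l"
      proof (cases "l \<in> P")
        case True
        show ?thesis
        proof (cases "l \<in> A")
          case True then show ?thesis using \<open>l \<in> P\<close> bA unfolding ccoord_def g_def ql by simp
        next
          case False
          have "inverse (pairing l h + b l / s) = s / (pairing l h * s + b l)"
            using s(1) by (simp add: field_simps)
          then show ?thesis using \<open>l \<in> P\<close> False unfolding ccoord_def g_def ql by simp
        qed
      next
        case False then show ?thesis unfolding ccoord_def g_def by simp
      qed
    qed
    then show ?thesis using F(2) qhZ qc by force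
  qed
  have ev: "eventually (\<lambda>s. s \<noteq> 0 \<and> (\<forall>l\<in>P - A. pairing l h * s + b l \<noteq> 0)) (at (0::complex))"
  proof (intro eventually_conj eventually_ball_finite ballI)
    show "eventually (\<lambda>s. s \<noteq> 0) (at (0::complex))" by (simp add: eventually_at_filter)
    show "finite (P - A)" using fP by simp
    fix l assume l: "l \<in> P - A"
    have "((\<lambda>s. pairing l h * s + b l) \<longlongrightarrow> pairing l h * 0 + b l) (at (0::complex))"
      by (intro tendsto_intros)
    moreover have "b l \<noteq> 0" using y1 l unfolding b_def A_def by auto
    ultimately show "eventually (\<lambda>s. pairing l h * s + b l \<noteq> 0) (at 0)"
      using tendsto_imp_eventually_ne by fastforce
  qed
  have "f (ccoord P A x) = 0" if f: "f \<in> F" for f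
  proof -
    have gt: "((\<lambda>s. g s l) \<longlongrightarrow> g 0 l) (at 0)" for l
    proof (cases "l \<in> P \<and> l \<notin> A")
      case True
      then have bl: "b l \<noteq> 0" using y1 unfolding b_def A_def by auto
      have "((\<lambda>s. s / (pairing l h * s + b l)) \<longlongrightarrow> 0 / (pairing l h * 0 + b l)) (at (0::complex))"
        by (intro tendsto_intros) (use bl in simp)
      then show ?thesis using True unfolding g_def by simp
    next
      case False then show ?thesis unfolding g_def by auto
    qed
    have "((\<lambda>s. f (g s)) \<longlongrightarrow> f (g 0)) (at 0)"
      using poly_tendsto[of f g "g 0"] F(1) f gt by blast
    moreover have "eventually (\<lambda>s. f (g s) = 0) (at 0)"
      using ev by (rule eventually_mono) (use gs f in blast)
    ultimately have "((\<lambda>s. 0) \<longlongrightarrow> f (g 0)) (at (0::complex))"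
      using Lim_transform_eventually by fastforce
    then have "f (g 0) = 0" using LIM_const_eq by metis
    then show ?thesis using g0 by simp
  qed
  then show "x \<in> Z" using F(3) xc by blast
qed


lemma pairing_repr:
  fixes B :: "(real^'n) set"
  assumes "independent B" "finite B" "l \<in> span B" "bij_betw e {..<m} B"
  shows "pairing l h = (\<Sum>j<m. complex_of_real (representation B l (e j)) * pairing (e j) h)"
proof -
  have "l = (\<Sum>b\<in>B. representation B l b *\<^sub>R b)"
    using sum_representation_eq[OF assms(1) assms(3) assms(2) order_refl] by simp
  then have "pairing l h = (\<Sum>b\<in>B. complex_of_real (representation B l b) * pairing b h)"
    by (metis (no_types, lifting) pairing_scale_left pairing_sum_left sum.cong)
  also have "\<dots> = (\<Sum>j<m. complex_of_real (representation B l (e j)) * pairing (e j) h)"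
    using sum.reindex_bij_betw[OF assms(4), of "\<lambda>b. complex_of_real (representation B l b) * pairing b h"] by simp
  finally show ?thesis .
qed

lemma flat_iso:
  assumes R: "root_system R" and Pp: "positive_system R P" and S: "flat R S"
  shows "iso_affine P (Cring P S) (rk S)"
proof -
  have fP: "finite P" using pos_finite[OF R Pp] .
  define V where "V = P \<inter> S"
  define m where "m = rk S"
  have spV: "span V = span S"
  proof -
    have "S \<subseteq> span V"
    proof
      fix a assume a: "a \<in> S"
      have aR: "a \<in> R" using a S unfolding flat_def by blast
      show "a \<in> span V"
      proof (cases "a \<in> P")
        case True then have "a \<in> V" using a unfolding V_def by blast
        then show ?thesis by (rule span_base)
      next
        case False
        then have "- a \<in> P" using pos_cover[OF R Pp aR] by blast
        moreover have "- a \<in> S" using flat_neg[OF R S a] .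
        ultimately have "- a \<in> V" unfolding V_def by blast
        then have "- a \<in> span V" by (rule span_base)
        then have "- (- a) \<in> span V" by (rule span_neg)
        then show ?thesis by simp
      qed
    qed
    moreover have "V \<subseteq> S" unfolding V_def by blast
    ultimately show ?thesis
      using span_minimal[OF \<open>S \<subseteq> span V\<close> subspace_span] span_mono[of V S] by blast
  qed
  obtain B where B: "B \<subseteq> V" "independent B" "V \<subseteq> span B" "card B = dim V"
    using basis_exists[of V] by blast
  have fB: "finite B" using B(1) fP finite_subset unfolding V_def by blast
  have cB: "card B = m" unfolding m_def rk_def B(4) dim_span by (metis spV span_eq_dim)
  obtain e where e: "bij_betw e {..<m} B"
    using ex_bij_betw_nat_finite[OF fB] cB by (auto simp: lessThan_atLeast0)
  have eB: "j < m \<Longrightarrow> e j \<in> B" for j using e unfolding bij_betw_def by auto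
  have einj: "i < m \<Longrightarrow> j < m \<Longrightarrow> e i = e j \<Longrightarrow> i = j" for i j
    using e unfolding bij_betw_def inj_on_def by auto
  define rep where "rep l j = complex_of_real (representation B l (e j))" for l j
  define phi where "phi t = (\<lambda>l. if l \<in> V then Some (\<Sum>j<m. rep l j * t j) else None)" for t :: "nat \<Rightarrow> complex"
  have repb: "rep (e i) j = (if j = i then 1 else 0)" if "i < m" "j < m" for i j
    unfolding rep_def using representation_basis[OF B(2) eB[OF that(1)]] einj[OF that(2,1)] that by auto
  have phi_e: "phi t (e i) = Some (t i)" if "i < m" for t i
  proof -
    have "e i \<in> V" using eB[OF that] B(1) by blast
    moreover have "(\<Sum>j<m. rep (e i) j * t j) = (\<Sum>j<m. if j = i then t j else 0)"
      by (rule sum.cong) (use that repb in auto)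
    moreover have "(\<Sum>j<m. if j = i then t j else 0) = t i" using that by simp
    ultimately show ?thesis unfolding phi_def by simp
  qed
  have VsB: "l \<in> span B" if "l \<in> V" for l using that B(3) by blast
  have pr: "pairing l h = (\<Sum>j<m. rep l j * pairing (e j) h)" if "l \<in> V" for l h
    unfolding rep_def using pairing_repr[OF B(2) fB VsB[OF that] e] .
  have VPS: "V = P \<inter> S" unfolding V_def ..
  have inC: "phi t \<in> Cring P S" if "t \<in> aff_space {..<m}" for t
  proof -
    have "independent B" by fact
    then obtain h where h: "\<forall>b\<in>B. pairing b h = t (inv_into {..<m} e b)"
      using solve_indep[of B "\<lambda>b. t (inv_into {..<m} e b)"] by blast
    have he: "pairing (e j) h = t j" if "j < m" for j
      using h eB[OF that] inv_into_f_f[of e "{..<m}" j] e that unfolding bij_betw_def by auto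
    have "x l = Some (pairing l h)" if "x = phi t" "l \<in> P \<inter> S" for x l
      using that pr[of l h] he unfolding phi_def VPS by simp
    then show ?thesis unfolding Cring_def Pd_def phi_def VPS by auto
  qed
  have inj: "inj_on phi (aff_space {..<m})"
  proof (rule inj_onI)
    fix t t' assume t: "t \<in> aff_space {..<m}" "t' \<in> aff_space {..<m}" "phi t = phi t'"
    show "t = t'"
    proof (rule ext)
      fix i show "t i = t' i"
      proof (cases "i < m")
        case True then show ?thesis using phi_e[of i t] phi_e[of i t'] t(3) by simp
      next
        case False then show ?thesis using t(1,2) unfolding aff_space_def by auto
      qed
    qed
  qed
  have surj: "Cring P S \<subseteq> phi ` aff_space {..<m}"
  proof
    fix x assume x: "x \<in> Cring P S"
    obtain h where h: "\<forall>l\<in>P \<inter> S. x l = Some (pairing l h)" using x unfolding Cring_def by blast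
    have xN: "\<forall>l\<in>P - S. x l = None" and xPd: "x \<in> Pd P" using x unfolding Cring_def by blast+
    define t where "t j = (if j < m then pairing (e j) h else 0)" for j
    have ta: "t \<in> aff_space {..<m}" unfolding aff_space_def t_def by auto
    have "phi t = x"
    proof (rule ext)
      fix l show "phi t l = x l"
      proof (cases "l \<in> V")
        case True
        have "(\<Sum>j<m. rep l j * t j) = (\<Sum>j<m. rep l j * pairing (e j) h)" unfolding t_def by simp
        then show ?thesis using True h pr[OF True, of h] unfolding phi_def VPS by simp
      next
        case False
        then have "x l = None" using xN xPd unfolding VPS Pd_def by (cases "l \<in> P") auto
        then show ?thesis using False unfolding phi_def by simp
      qed
    qed
    then show "x \<in> phi ` aff_space {..<m}" using ta by blast
  qed
  have img: "phi ` aff_space {..<m} = Cring P S" using inC surj by blast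
  have bij: "bij_betw phi (aff_space {..<m}) (Cring P S)" unfolding bij_betw_def using inj img by blast
  have chartC: "Cring P S \<subseteq> chart P V"
    unfolding chart_def Cring_def VPS by auto
  have VP: "V \<subseteq> P" unfolding V_def by blast
  have coords: "\<forall>l\<in>P. \<exists>p\<in>poly_fun. \<forall>t\<in>aff_space {..<m}. ccoord P V (phi t) l = p t"
  proof
    fix l assume l: "l \<in> P"
    show "\<exists>p\<in>poly_fun. \<forall>t\<in>aff_space {..<m}. ccoord P V (phi t) l = p t"
    proof (cases "l \<in> V")
      case True
      have t: "(\<lambda>t. rep l j * t j) \<in> poly_fun" for j using pf_mult[OF pf_const pf_var] .
      have "(\<lambda>t. \<Sum>j<m. rep l j * t j) \<in> poly_fun" by (rule poly_sum) (auto intro: t)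
      moreover have "\<forall>t\<in>aff_space {..<m}. ccoord P V (phi t) l = (\<Sum>j<m. rep l j * t j)"
        using True l unfolding ccoord_def phi_def by simp
      ultimately show ?thesis by (intro bexI[of _ "\<lambda>t. \<Sum>j<m. rep l j * t j"]) auto
    next
      case False
      have "\<forall>t\<in>aff_space {..<m}. ccoord P V (phi t) l = 0"
        using False l unfolding ccoord_def phi_def by simp
      then show ?thesis using pf_const[of 0] by (intro bexI[of _ "\<lambda>t. 0"]) auto
    qed
  qed
  have inv: "\<forall>i<m. \<exists>q\<in>poly_fun. \<forall>x\<in>Cring P S. inv_into (aff_space {..<m}) phi x i = q (ccoord P V x)"
  proof (intro allI impI)
    fix i assume i: "i < m"
    have H: "inv_into (aff_space {..<m}) phi x i = ccoord P V x (e i)" if x: "x \<in> Cring P S" for x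
    proof -
      let ?t = "inv_into (aff_space {..<m}) phi x"
      have "x \<in> phi ` aff_space {..<m}" using x img by blast
      then have "phi ?t = x" by (rule f_inv_into_f)
      then have xe: "x (e i) = Some (?t i)" using phi_e[OF i, of ?t] by simp
      have eV: "e i \<in> V" "e i \<in> P" using eB[OF i] B(1) VP by auto
      have "ccoord P V x (e i) = the (x (e i))" unfolding ccoord_def using eV by (simp only: if_True)
      then show ?thesis using xe by simp
    qed
    show "\<exists>q\<in>poly_fun. \<forall>x\<in>Cring P S. inv_into (aff_space {..<m}) phi x i = q (ccoord P V x)"
    proof (rule bexI[of _ "\<lambda>u. u (e i)"])
      show "(\<lambda>u. u (e i)) \<in> poly_fun" by (rule pf_var)
      show "\<forall>x\<in>Cring P S. inv_into (aff_space {..<m}) phi x i = ccoord P V x (e i)" using H by blast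
    qed
  qed
  have "\<exists>A\<subseteq>P. Cring P S \<subseteq> chart P A \<and>
     (\<exists>phi. bij_betw phi (aff_space {..<m}) (Cring P S) \<and>
        (\<forall>lam\<in>P. \<exists>p\<in>poly_fun. \<forall>t\<in>aff_space {..<m}. ccoord P A (phi t) lam = p t) \<and>
        (\<forall>i<m. \<exists>q\<in>poly_fun. \<forall>x\<in>Cring P S. inv_into (aff_space {..<m}) phi x i = q (ccoord P A x)))"
    apply (rule exI[of _ V])
    apply (intro conjI VP chartC)
    apply (rule exI[of _ phi])
    using bij coords inv by simp
  then show ?thesis unfolding iso_affine_def m_def .
qed


lemma cring_fin: assumes "x \<in> Cring P S" shows "{l\<in>P. x l \<noteq> None} = P \<inter> S"
proof -
  have a: "\<forall>l\<in>P - S. x l = None" and b: "\<exists>h. \<forall>l\<in>P \<inter> S. x l = Some (pairing l h)"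
    using assms unfolding Cring_def by blast+
  from b obtain h where h: "\<forall>l\<in>P \<inter> S. x l = Some (pairing l h)" by blast
  show ?thesis
  proof (intro set_eqI iffI)
    fix l assume "l \<in> {l\<in>P. x l \<noteq> None}"
    then have "l \<in> P" "x l \<noteq> None" by auto
    then show "l \<in> P \<inter> S" using a by (cases "l \<in> S") auto
  next
    fix l assume "l \<in> P \<inter> S"
    then show "l \<in> {l\<in>P. x l \<noteq> None}" using h by auto
  qed
qed

definition x0 :: "(real^'n) set \<Rightarrow> (real^'n) set \<Rightarrow> (real^'n \<Rightarrow> complex option)" where
  "x0 P S = (\<lambda>l. if l \<in> P \<inter> S then Some 0 else None)"

lemma x0_in: "x0 P S \<in> Cring P S"
  unfolding Cring_def x0_def Pd_def by (auto intro: exI[of _ 0])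

lemma act_cring: assumes "x \<in> Cring P S" shows "act y x \<in> Cring P S"
proof -
  obtain h where h: "\<forall>l\<in>P \<inter> S. x l = Some (pairing l h)" using assms unfolding Cring_def by blast
  have "\<forall>l\<in>P \<inter> S. act y x l = Some (pairing l (h + y))"
    using h unfolding act_def by (simp add: pairing_add_right)
  then show ?thesis using assms unfolding Cring_def Pd_def act_def by auto
qed

lemma orbit_cring: assumes x: "x \<in> Cring P S" shows "orbit x = Cring P S"
proof
  show "orbit x \<subseteq> Cring P S" unfolding orbit_def using act_cring[OF x] by auto
  show "Cring P S \<subseteq> orbit x"
  proof
    fix z assume z: "z \<in> Cring P S"
    obtain h where h: "\<forall>l\<in>P \<inter> S. x l = Some (pairing l h)" using x unfolding Cring_def by blast
    obtain h' where h': "\<forall>l\<in>P \<inter> S. z l = Some (pairing l h')" using z unfolding Cring_def by blast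
    have "act (h' - h) x = z"
    proof (rule ext)
      fix l
      show "act (h' - h) x l = z l"
      proof (cases "l \<in> P \<inter> S")
        case True then show ?thesis using h h' unfolding act_def by (simp add: pairing_diff_right)
      next
        case False
        then have "x l = None \<and> z l = None" using x z unfolding Cring_def Pd_def by (cases "l \<in> P") auto
        then show ?thesis unfolding act_def by simp
      qed
    qed
    then show "z \<in> orbit x" unfolding orbit_def by blast
  qed
qed

lemma Cring_R: assumes Pp: "positive_system R P" shows "Cring P R = hset P"
proof
  have PR: "P \<subseteq> R" using pos_sub[OF Pp] .
  show "Cring P R \<subseteq> hset P"
  proof
    fix x assume x: "x \<in> Cring P R"
    obtain h where h: "\<forall>l\<in>P \<inter> R. x l = Some (pairing l h)" using x unfolding Cring_def by blast
    have "x = emb P h"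
      using h x PR unfolding emb_def Cring_def Pd_def by (intro ext) auto
    then show "x \<in> hset P" unfolding hset_def by blast
  qed
  show "hset P \<subseteq> Cring P R"
    unfolding hset_def Cring_def emb_def Pd_def using PR by auto
qed

lemma kstep_iff_flat:
  fixes R :: "(real^'n) set"
  assumes R: "root_system R"
  shows "(\<exists>k. k \<le> CARD('n) \<and> kstep_good R k S) \<longleftrightarrow> flat R S"
proof
  assume "\<exists>k. k \<le> CARD('n) \<and> kstep_good R k S"
  then show "flat R S" using kstep_flat[OF R] by blast
next
  assume "flat R S"
  then have "kstep_good R (CARD('n) - rk S) S" using flat_kstep[OF R] by blast
  then show "\<exists>k. k \<le> CARD('n) \<and> kstep_good R k S" by (intro exI[of _ "CARD('n) - rk S"]) simp
qed

lemma cells_eq: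
  fixes R :: "(real^'n) set"
  assumes R: "root_system R"
  shows "{Cring P S | S k. k \<le> CARD('n) \<and> kstep_good R k S} = Cring P ` {S. flat R S}"
  using kstep_iff_flat[OF R] by blast

lemma Zrel_union:
  fixes R :: "(real^'n) set"
  assumes R: "root_system R" and Pp: "positive_system R P"
  shows "Zrel P = \<Union>(Cring P ` {S. flat R S})"
  using Cring_sub_Zrel[OF R Pp] Zrel_sub_Cring[OF R Pp] by blast

lemma hbar_eq:
  fixes R :: "(real^'n) set"
  assumes R: "root_system R" and Pp: "positive_system R P"
  shows "zclosure P (hset P) = Zrel P"
proof
  have fP: "finite P" using pos_finite[OF R Pp] .
  have "hset P \<subseteq> Zrel P" using Cring_sub_Zrel[OF R Pp flat_R] Cring_R[OF Pp] by simp
  moreover have "zclosed P (Zrel P)" using zcl_zclosed[OF zcl_Zrel[OF fP]] .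
  ultimately show "zclosure P (hset P) \<subseteq> Zrel P" unfolding zclosure_def by blast
  show "Zrel P \<subseteq> zclosure P (hset P)"
  proof
    fix x assume "x \<in> Zrel P"
    then obtain S where S: "flat R S" "x \<in> Cring P S" using Zrel_sub_Cring[OF R Pp] by blast
    show "x \<in> zclosure P (hset P)" unfolding zclosure_def
      using Cring_sub_closed[OF R Pp S(1)] S(2) by blast
  qed
qed


lemma lev_cring: "card {l\<in>P. \<exists>x\<in>Cring P S. x l \<noteq> None} = card (P \<inter> S)"
proof -
  have "{l\<in>P. \<exists>x\<in>Cring P S. x l \<noteq> None} = P \<inter> S"
  proof (intro set_eqI iffI)
    fix l assume "l \<in> {l\<in>P. \<exists>x\<in>Cring P S. x l \<noteq> None}"
    then obtain x where "l \<in> P" "x \<in> Cring P S" "x l \<noteq> None" by blast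
    then have "l \<in> {l\<in>P. x l \<noteq> None}" by simp
    then show "l \<in> P \<inter> S" unfolding cring_fin[OF \<open>x \<in> Cring P S\<close>] .
  next
    fix l assume l: "l \<in> P \<inter> S"
    have "l \<in> {l\<in>P. x0 P S l \<noteq> None}" unfolding cring_fin[OF x0_in] using l .
    then show "l \<in> {l\<in>P. \<exists>x\<in>Cring P S. x l \<noteq> None}" using x0_in[of P S] by blast
  qed
  then show ?thesis by simp
qed

lemma level_closed:
  fixes R :: "(real^'n) set"
  assumes R: "root_system R" and Pp: "positive_system R P" and S: "flat R S"
  defines "lev \<equiv> \<lambda>C. card {l\<in>P. \<exists>x\<in>C. x l \<noteq> None}"
  shows "zclosed P (Cring P S \<union> \<Union>{C'\<in>Cring P ` {S. flat R S}. lev C' < lev (Cring P S)})"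
proof -
  have fP: "finite P" using pos_finite[OF R Pp] .
  define c where "c = card (P \<inter> S)"
  have levC: "lev (Cring P S') = card (P \<inter> S')" for S' unfolding lev_def by (rule lev_cring)
  have eq: "Cring P S \<union> \<Union>{C'\<in>Cring P ` {S. flat R S}. lev C' < lev (Cring P S)}
          = Zrel P \<inter> (Lset P c \<union> Yset P (P \<inter> S))"
  proof
    show "Cring P S \<union> \<Union>{C'\<in>Cring P ` {S. flat R S}. lev C' < lev (Cring P S)}
          \<subseteq> Zrel P \<inter> (Lset P c \<union> Yset P (P \<inter> S))"
    proof
      fix x assume "x \<in> Cring P S \<union> \<Union>{C'\<in>Cring P ` {S. flat R S}. lev C' < lev (Cring P S)}"
      then consider (a) "x \<in> Cring P S" | (b) S' where "flat R S'" "x \<in> Cring P S'" "lev (Cring P S') < lev (Cring P S)"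
        by blast
      then show "x \<in> Zrel P \<inter> (Lset P c \<union> Yset P (P \<inter> S))"
      proof cases
        case a
        then have "x \<in> Zrel P" using Cring_sub_Zrel[OF R Pp S] by blast
        moreover have "x \<in> Yset P (P \<inter> S)" using a unfolding Yset_def Cring_def by auto
        ultimately show ?thesis by blast
      next
        case b
        then have "x \<in> Zrel P" using Cring_sub_Zrel[OF R Pp b(1)] by blast
        moreover have "x \<in> Lset P c"
        proof -
          have "x \<in> Pd P" using b(2) unfolding Cring_def by blast
          moreover have "card {l\<in>P. x l \<noteq> None} < c"
            unfolding cring_fin[OF b(2)] c_def using b(3) unfolding levC .
          ultimately show ?thesis unfolding Lset_def by blast
        qed
        ultimately show ?thesis by blast
      qed
    qed
    show "Zrel P \<inter> (Lset P c \<union> Yset P (P \<inter> S))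
          \<subseteq> Cring P S \<union> \<Union>{C'\<in>Cring P ` {S. flat R S}. lev C' < lev (Cring P S)}"
    proof
      fix x assume x: "x \<in> Zrel P \<inter> (Lset P c \<union> Yset P (P \<inter> S))"
      then obtain S' where S': "flat R S'" "x \<in> Cring P S'" using Zrel_sub_Cring[OF R Pp] by blast
      have fin: "{l\<in>P. x l \<noteq> None} = P \<inter> S'" using cring_fin[OF S'(2)] .
      show "x \<in> Cring P S \<union> \<Union>{C'\<in>Cring P ` {S. flat R S}. lev C' < lev (Cring P S)}"
      proof (cases "card (P \<inter> S') < c")
        case True
        then have "lev (Cring P S') < lev (Cring P S)" using levC c_def by simp
        then show ?thesis using S' by blast
      next
        case False
        then have "\<not> card {l\<in>P. x l \<noteq> None} < c" unfolding fin .
        then have "x \<notin> Lset P c" unfolding Lset_def by blast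
        then have "x \<in> Yset P (P \<inter> S)" using x by blast
        then have sub: "P \<inter> S' \<subseteq> P \<inter> S" unfolding Yset_def using fin by blast
        have fPS: "finite (P \<inter> S)" using fP by simp
        have "card (P \<inter> S') \<le> card (P \<inter> S)" by (rule card_mono[OF fPS sub])
        then have "card (P \<inter> S') = card (P \<inter> S)" using False unfolding c_def by simp
        then have "P \<inter> S' = P \<inter> S" using card_subset_eq[OF fPS sub] by simp
        then have "S' = S" using flat_eq[OF R Pp S'(1) S] by blast
        then show ?thesis using S' by blast
      qed
    qed
  qed
  have "zcl P (Zrel P \<inter> (Lset P c \<union> Yset P (P \<inter> S)))"
    by (intro zcl_Int zcl_Un zcl_Zrel zcl_Lset zcl_Yset fP)
  then show ?thesis unfolding eq by (rule zcl_zclosed)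
qed

theorem mainTheorem6:
  fixes R P :: "(real^'n) set"
  assumes "root_system R" and "positive_system R P"
  defines "hbar \<equiv> zclosure P (hset P)"
      and "r \<equiv> CARD('n)"
      and "cells \<equiv> {Cring P S | S k. k \<le> CARD('n) \<and> kstep_good R k S}"
  shows "(\<forall>y h. act y (emb P h) = emb P (h + y))
    \<and> (\<forall>x :: real^'n \<Rightarrow> complex option. act 0 x = x)
    \<and> (\<forall>(y :: complex^'n) z (x :: real^'n \<Rightarrow> complex option). act (y + z) x = act y (act z x))
    \<and> (\<forall>y. \<forall>x\<in>hbar. act y x \<in> hbar)
    \<and> hbar = \<Union>cells
    \<and> (\<forall>S1 S2 k1 k2. k1 \<le> r \<and> kstep_good R k1 S1 \<and> k2 \<le> r \<and> kstep_good R k2 S2 \<and> S1 \<noteq> S2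
          \<longrightarrow> Cring P S1 \<inter> Cring P S2 = {})
    \<and> {orbit x | x. x \<in> hbar} = cells
    \<and> finite cells
    \<and> Cring P R = hset P \<and> zopen_in P hbar (hset P)
    \<and> (\<forall>k S. k \<le> r \<and> kstep_good R k S \<longrightarrow> rk S = r - k \<and> iso_affine P (Cring P S) (rk S))
    \<and> (\<exists>lev :: (real^'n \<Rightarrow> complex option) set \<Rightarrow> nat.
          \<forall>C\<in>cells. zclosed P (C \<union> \<Union>{C'\<in>cells. lev C' < lev C}))"
proof -
  note R = assms(1) and Pp = assms(2)
  have fP: "finite P" using pos_finite[OF R Pp] .
  have PR: "P \<subseteq> R" using pos_sub[OF Pp] .
  have cells: "cells = Cring P ` {S. flat R S}" unfolding cells_def using cells_eq[OF R] .
  have hb: "hbar = Zrel P" unfolding hbar_def using hbar_eq[OF R Pp] .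
  have hbU: "hbar = \<Union>cells" unfolding hb cells using Zrel_union[OF R Pp] .
  have p1: "\<forall>y h. act y (emb P h) = emb P (h + y)"
    unfolding act_def emb_def by (auto simp: pairing_add_right)
  have p2: "\<forall>x :: real^'n \<Rightarrow> complex option. act 0 x = x"
    unfolding act_def by (simp add: option.map_ident)
  have p3: "\<forall>(y :: complex^'n) z (x :: real^'n \<Rightarrow> complex option). act (y + z) x = act y (act z x)"
  proof (intro allI)
    fix y z :: "complex^'n" and x :: "real^'n \<Rightarrow> complex option"
    show "act (y + z) x = act y (act z x)"
    proof (rule ext)
      fix l show "act (y + z) x l = act y (act z x) l"
        unfolding act_def by (cases "x l") (simp_all add: pairing_add_right algebra_simps)
    qed
  qed
  have p4: "\<forall>y. \<forall>x\<in>hbar. act y x \<in> hbar"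
    unfolding hbU cells using act_cring by blast
  have p6: "\<forall>S1 S2 k1 k2. k1 \<le> r \<and> kstep_good R k1 S1 \<and> k2 \<le> r \<and> kstep_good R k2 S2 \<and> S1 \<noteq> S2
          \<longrightarrow> Cring P S1 \<inter> Cring P S2 = {}"
  proof (intro allI impI)
    fix S1 S2 k1 k2 assume H: "k1 \<le> r \<and> kstep_good R k1 S1 \<and> k2 \<le> r \<and> kstep_good R k2 S2 \<and> S1 \<noteq> S2"
    have f1: "flat R S1" using H kstep_flat[OF R] by blast
    have f2: "flat R S2" using H kstep_flat[OF R] by blast
    show "Cring P S1 \<inter> Cring P S2 = {}"
    proof (rule ccontr)
      assume "Cring P S1 \<inter> Cring P S2 \<noteq> {}"
      then obtain x where x: "x \<in> Cring P S1" "x \<in> Cring P S2" by blast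
      have "P \<inter> S1 = P \<inter> S2" using cring_fin[OF x(1)] cring_fin[OF x(2)] by simp
      then have "S1 = S2" using flat_eq[OF R Pp f1 f2] by blast
      then show False using H by blast
    qed
  qed
  have p7: "{orbit x | x. x \<in> hbar} = cells"
  proof
    show "{orbit x | x. x \<in> hbar} \<subseteq> cells"
    proof
      fix Ob assume "Ob \<in> {orbit x | x. x \<in> hbar}"
      then obtain x where x: "x \<in> hbar" "Ob = orbit x" by blast
      then obtain C where C: "C \<in> cells" "x \<in> C" using hbU by blast
      then obtain S where S: "flat R S" "C = Cring P S" using cells by blast
      have "Ob = C" using orbit_cring[of x P S] x C S by simp
      then show "Ob \<in> cells" using C by simp
    qed
    show "cells \<subseteq> {orbit x | x. x \<in> hbar}"
    proof
      fix C assume C: "C \<in> cells"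
      then obtain S where S: "flat R S" "C = Cring P S" using cells by blast
      have "x0 P S \<in> hbar" using hbU C S x0_in by blast
      moreover have "orbit (x0 P S) = C" using orbit_cring[OF x0_in] S by simp
      ultimately show "C \<in> {orbit x | x. x \<in> hbar}" by blast
    qed
  qed
  have p8: "finite cells"
  proof -
    have "finite R" using R unfolding root_system_def by blast
    then have "finite (Cring P ` Pow R)" by simp
    moreover have "cells \<subseteq> Cring P ` Pow R" unfolding cells flat_def by blast
    ultimately show ?thesis using finite_subset by blast
  qed
  have p9a: "Cring P R = hset P" using Cring_R[OF Pp] .
  have p9b: "zopen_in P hbar (hset P)"
    unfolding zopen_in_def
  proof (intro conjI exI)
    show "hset P \<subseteq> hbar" unfolding hbar_def zclosure_def by blast
    show "zclosed P (Zn P)" using zcl_zclosed[OF zcl_Zn[OF fP]] .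
    show "hbar - hset P = hbar \<inter> Zn P"
    proof
      show "hbar - hset P \<subseteq> hbar \<inter> Zn P"
      proof
        fix x assume x: "x \<in> hbar - hset P"
        then obtain S where S: "flat R S" "x \<in> Cring P S" using hb Zrel_sub_Cring[OF R Pp] by blast
        have xPd: "x \<in> Pd P" using S(2) unfolding Cring_def by blast
        have "\<exists>l\<in>P. x l = None"
        proof (rule ccontr)
          assume "\<not> (\<exists>l\<in>P. x l = None)"
          then have "P \<inter> S = P \<inter> R" using cring_fin[OF S(2)] PR by auto
          then have "S = R" using flat_eq[OF R Pp S(1) flat_R] by blast
          then show False using x S(2) p9a by blast
        qed
        then show "x \<in> hbar \<inter> Zn P" using x xPd unfolding Zn_def by blast
      qed
      show "hbar \<inter> Zn P \<subseteq> hbar - hset P"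
        unfolding Zn_def hset_def emb_def by auto
    qed
  qed
  have p10: "\<forall>k S. k \<le> r \<and> kstep_good R k S \<longrightarrow> rk S = r - k \<and> iso_affine P (Cring P S) (rk S)"
  proof (intro allI impI)
    fix k S assume H: "k \<le> r \<and> kstep_good R k S"
    then have "flat R S \<and> rk S + k = CARD('n)" using kstep_flat[OF R] by blast
    then show "rk S = r - k \<and> iso_affine P (Cring P S) (rk S)"
      using flat_iso[OF R Pp] unfolding r_def by auto
  qed
  have p11: "\<exists>lev :: (real^'n \<Rightarrow> complex option) set \<Rightarrow> nat.
          \<forall>C\<in>cells. zclosed P (C \<union> \<Union>{C'\<in>cells. lev C' < lev C})"
  proof (intro exI ballI)
    fix C assume "C \<in> cells"
    then obtain S where S: "flat R S" "C = Cring P S" using cells by blast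
    show "zclosed P (C \<union> \<Union>{C'\<in>cells. (\<lambda>C. card {l\<in>P. \<exists>x\<in>C. x l \<noteq> None}) C' < (\<lambda>C. card {l\<in>P. \<exists>x\<in>C. x l \<noteq> None}) C})"
      unfolding cells S(2) using level_closed[OF R Pp S(1)] by simp
  qed
  show ?thesis by (intro conjI p1 p2 p3 p4 hbU p6 p7 p8 p9a p9b p10 p11)
qed

end
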